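(* Let $C^{d,d_2}_{\varepsilon_2}(\lambda,\mathbf k)$ and $\phi_{\varepsilon_2}(\mathbf k)$ ($\mathbf k\in\mathbb Z^{r_2}_{++}$, $k_{r_2+1}=0$) be as below. (1) Let $\varepsilon_2=1$, $r_2=2$. The zero set of $(\lambda)_{\phi_1(\mathbf k),d}C_1^{d,d_2}(\lambda,\mathbf k)$ is contained in $[\frac{d-d_2}2-(k_1+k_2)+1,\frac{d-d_2}2-k_1]$ if $k_2>0$ and is empty if $k_2=0$. (2) Let $\varepsilon_2=1$, $d_2=d/2$. If $2\le m_1\le m_2\le r_2$, $k_2=\dots=k_{m_1}$ and $k_{m_2+1}=0$, the zero set of $(\lambda)_{\phi_1(\mathbf k),d}C_1^{d,d_2}(\lambda,\mathbf k)$ is contained in $[\frac d4(m_1-1)-(k_1+k_2)+1,\frac d4(2m_2-3)-k_{m_2-1}]$ if $k_1>k_2>0$, in $[\frac d4(2\lceil m_1/2\rceil-1)-(k_1+k_2)+1,\frac d4(2m_2-3)-k_{m_2-1}]$ if $k_1=k_2>0$, and is empty if $k_2=0$. (3) Let $\varepsilon_2=2$. If $1\le m_1,m_2,m_3\le r_2$, $m_1,m_2\le m_3$, $k_1-k_{m_1}\le1$, $k_a=1$ for $m_2+1\le a\le m_3$ and $k_{m_3+1}=0$, the zero set of $(\lambda)_{\phi_2(\mathbf k),d}C_2^{d,d_2}(\lambda,\mathbf k)$ is contained in $[\frac d2m_1-k_1+\frac32,\frac d2(m_2+m_3-1)-\frac{k_{m_2}}2+\frac12]$ if $k_1\ge2$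 and $m_2<m_3$, in $[\frac d2m_1-k_1+\frac32,\frac d2(2m_3-1)-\lceil\frac{k_{m_3}}2\rceil+\frac12]$ if $k_1\ge2$ and $m_2=m_3$, and is empty if $k_1\le1$. Moreover, for $m=1,\dots,\varepsilon_2r_2-1$, if $\phi_{\varepsilon_2}(\mathbf k)_{m+1}=0$ and $\phi_{\varepsilon_2}(\mathbf k)_m\ne0$, then $C^{d,d_2}_{\varepsilon_2}(\lambda,\mathbf k)$ is holomorphic and non-zero at $\lambda=\frac d2m$ and has a pole at $\lambda=\frac d2(m-1)$.
   Context: $d>0$, $d_2>0$ real, $r_2\ge1$ integer, $\mathbb Z^s_{++}=\{m_1\ge\dots\ge m_s\ge0\}$, $(a)_m=a(a+1)\cdots(a+m-1)$, $(\lambda)_{\mathbf m,d}=\prod_j(\lambda-\frac d2(j-1))_{m_j}$, $|\mathbf k|=\sum_ik_i$, $k_{r_2+1}:=0$. $C_1^{d,d_2}(\lambda,\mathbf k)=\frac{(\lambda+k_1-\frac{d-d_2}2)_{k_2}}{(\lambda)_{k_1+k_2}(\lambda-\frac d2)_{k_2}}$ when $r_2=2$ (case (1)); $C_1^{d,d/2}(\lambda,\mathbf k)=\frac{\prod_{1\le i<j\le r_2}(\lambda-\frac d4(i+j-2))_{k_i+k_j}}{\prod_{1\le i<j\le r_2+1}(\lambda-\frac d4(i+j-3))_{k_i+k_j}}$ (case (2)); $C_2^{d,d_2}(\lambda,\mathbf k)=\frac{2^{|\mathbf k|}\prod_{1\le i<j\le r_2}(2\lambda-1-d(i+j-1))_{k_i+k_j}}{\prod_{1\le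 i<j\le r_2+1}(2\lambda-1-d(i+j-2))_{k_i+k_j}}\frac{\prod_{i=1}^{r_2}(\lambda-\frac12-\frac d2(2i-1))_{k_i}}{\prod_{i=1}^{r_2}(\lambda-d(i-1))_{k_i}}$ (case (3)). $\phi_1(\mathbf k)_a=\min\{k_i+k_j:1\le i<j\le r_2+1,i+j=2a+1\}$ ($1\le a\le r_2$), $\phi_2(\mathbf k)_a=\min\{\lfloor\frac{k_i+k_j}2\rfloor:1\le i\le j\le r_2+1,i+j=a+1\}$ ($1\le a\le2r_2$); in the last claim, in case $\varepsilon_2=1$ the formula used is that of case (1) or (2), and $\phi_{\varepsilon_2}(\mathbf k)_{\varepsilon_2r_2+1}:=0$. The products $(\lambda)_{\phi_{\varepsilon_2}(\mathbf k),d}C^{d,d_2}_{\varepsilon_2}(\lambda,\mathbf k)$ are entire in $\lambda$. *)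

theory Defs
  imports Complex_Main "HOL-Computational_Algebra.Polynomial"
begin

text \<open>A partition-like multi-index k in Z^{r2}_{++} is a nonincreasing list of naturals of
length r2; entry k_i (1-based) is kx ks i, and k_i = 0 for i > r2 (so k_{r2+1} = 0).\<close>

definition kx :: "nat list \<Rightarrow> nat \<Rightarrow> nat" where
  "kx ks i = (if 1 \<le> i \<and> i \<le> length ks then ks ! (i - 1) else 0)"

definition lpoch :: "complex \<Rightarrow> complex \<Rightarrow> nat \<Rightarrow> complex poly" where
  "lpoch a b m = (\<Prod>t<m. [: b + of_nat t, a :])"

text \<open>Generalized Pochhammer (lambda)_{m,d} = prod_{j=1}^s (lambda - d/2 (j-1))_{m_j}.\<close>
definition gpoch :: "real \<Rightarrow> nat \<Rightarrow> (nat \<Rightarrow> nat) \<Rightarrow> complex poly" where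
  "gpoch d s mv = (\<Prod>j\<in>{1..s}. lpoch 1 (- complex_of_real (d / 2 * (real j - 1))) (mv j))"

definition phi1 :: "nat list \<Rightarrow> nat \<Rightarrow> nat" where
  "phi1 ks a = (if 1 \<le> a \<and> a \<le> length ks then
     Min {kx ks i + kx ks j | i j. 1 \<le> i \<and> i < j \<and> j \<le> length ks + 1 \<and> i + j = 2 * a + 1}
   else 0)"

definition phi2 :: "nat list \<Rightarrow> nat \<Rightarrow> nat" where
  "phi2 ks a = (if 1 \<le> a \<and> a \<le> 2 * length ks then
     Min {(kx ks i + kx ks j) div 2 | i j. 1 \<le> i \<and> i \<le> j \<and> j \<le> length ks + 1 \<and> i + j = a + 1}
   else 0)"

text \<open>Case (1), r2 = 2: numerator and denominator of C_1^{d,d2}.\<close>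
definition C1a_num :: "real \<Rightarrow> real \<Rightarrow> nat list \<Rightarrow> complex poly" where
  "C1a_num d d2 ks = lpoch 1 (complex_of_real (real (kx ks 1) - (d - d2) / 2)) (kx ks 2)"

definition C1a_den :: "real \<Rightarrow> nat list \<Rightarrow> complex poly" where
  "C1a_den d ks = lpoch 1 0 (kx ks 1 + kx ks 2) * lpoch 1 (- complex_of_real (d / 2)) (kx ks 2)"

definition C1b_num :: "real \<Rightarrow> nat list \<Rightarrow> complex poly" where
  "C1b_num d ks = (\<Prod>i\<in>{1..length ks}. \<Prod>j\<in>{i+1..length ks}.
      lpoch 1 (- complex_of_real (d / 4 * (real (i + j) - 2))) (kx ks i + kx ks j))"

definition C1b_den :: "real \<Rightarrow> nat list \<Rightarrow> complex poly" where
  "C1b_den d ks = (\<Prod>i\<in>{1..length ks + 1}. \<Prod>j\<in>{i+1..length ks + 1}.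
      lpoch 1 (- complex_of_real (d / 4 * (real (i + j) - 3))) (kx ks i + kx ks j))"

definition C2_num :: "real \<Rightarrow> nat list \<Rightarrow> complex poly" where
  "C2_num d ks = smult (2 ^ sum_list ks)
     ((\<Prod>i\<in>{1..length ks}. \<Prod>j\<in>{i+1..length ks}.
        lpoch 2 (- 1 - complex_of_real (d * (real (i + j) - 1))) (kx ks i + kx ks j))
      * (\<Prod>i\<in>{1..length ks}.
        lpoch 1 (- 1 / 2 - complex_of_real (d / 2 * (2 * real i - 1))) (kx ks i)))"

definition C2_den :: "real \<Rightarrow> nat list \<Rightarrow> complex poly" where
  "C2_den d ks =
     (\<Prod>i\<in>{1..length ks + 1}. \<Prod>j\<in>{i+1..length ks + 1}.
        lpoch 2 (- 1 - complex_of_real (d * (real (i + j) - 2))) (kx ks i + kx ks j))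
      * (\<Prod>i\<in>{1..length ks}. lpoch 1 (- complex_of_real (d * (real i - 1))) (kx ks i))"

text \<open>For a rational function N/D (N, D nonzero polynomials): its zero set (points of
positive net order), holomorphy-and-nonvanishing (net order 0), and poles (negative net order).\<close>
definition rat_zeros :: "complex poly \<Rightarrow> complex poly \<Rightarrow> complex set" where
  "rat_zeros N D = {z. order z D < order z N}"

definition rat_holo_nonzero_at :: "complex poly \<Rightarrow> complex poly \<Rightarrow> complex \<Rightarrow> bool" where
  "rat_holo_nonzero_at N D z \<longleftrightarrow> order z N = order z D"

definition rat_pole_at :: "complex poly \<Rightarrow> complex poly \<Rightarrow> complex \<Rightarrow> bool" where
  "rat_pole_at N D z \<longleftrightarrow> order z N < order z D"

end

theory Submission
  imports Defs
begin



definition ind :: "complex \<Rightarrow> nat \<Rightarrow> nat" where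
  "ind w L = (if \<exists>t. t < L \<and> w = of_nat t then 1 else 0)"

lemma ind_le1: "ind w L \<le> 1" by (simp add: ind_def)

lemma ind_nz: "ind w L \<noteq> 0 \<Longrightarrow> \<exists>t. t < L \<and> w = of_nat t"
  by (simp add: ind_def split: if_splits)

lemma ind_split: "ind w (a + b) = ind w a + ind (w - of_nat a) b"
proof -
  have "(\<exists>t. t < a + b \<and> w = of_nat t) \<longleftrightarrow> (\<exists>t. t < a \<and> w = of_nat t) \<or> (\<exists>t. t < b \<and> w - of_nat a = of_nat t)"
  proof
    assume "\<exists>t. t < a + b \<and> w = of_nat t"
    then obtain t where t: "t < a + b" "w = of_nat t" by blast
    show "(\<exists>t. t < a \<and> w = of_nat t) \<or> (\<exists>t. t < b \<and> w - of_nat a = of_nat t)"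
    proof (cases "t < a")
      case True then show ?thesis using t by blast
    next
      case False then have "t - a < b" "w - of_nat a = of_nat (t - a)" using t by (auto simp: of_nat_diff)
      then show ?thesis by blast
    qed
  next
    assume "(\<exists>t. t < a \<and> w = of_nat t) \<or> (\<exists>t. t < b \<and> w - of_nat a = of_nat t)"
    then show "\<exists>t. t < a + b \<and> w = of_nat t"
    proof
      assume "\<exists>t. t < b \<and> w - of_nat a = of_nat t"
      then obtain t where "t < b" "w - of_nat a = of_nat t" by blast
      then have "a + t < a + b" "w = of_nat (a + t)" by (auto simp: algebra_simps)
      then show ?thesis by blast
    qed auto
  qed
  moreover have "\<not> ((\<exists>t. t < a \<and> w = of_nat t) \<and> (\<exists>t. t < b \<and> w - of_nat a = of_nat t))"
  proof
    assume "(\<exists>t. t < a \<and> w = of_nat t) \<and> (\<exists>t. t < b \<and> w - of_nat a = of_nat t)"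
    then obtain t t' where "t < a" "w = of_nat t" "w - of_nat a = of_nat t'" by blast
    then have "(of_nat t :: complex) = of_nat (a + t')" by (simp add: algebra_simps)
    then have "t = a + t'" using of_nat_eq_iff by blast
    with \<open>t < a\<close> show False by simp
  qed
  ultimately show ?thesis unfolding ind_def by auto
qed

lemma ind_split': "a \<le> L \<Longrightarrow> ind w L = ind w a + ind (w - of_nat a) (L - a)"
  using ind_split[of w a "L - a"] by simp

lemma ind_evenodd: "ind w L = ind (w / 2) ((L + 1) div 2) + ind ((w - 1) / 2) (L div 2)"
proof -
  have A: "(\<exists>t. t < L \<and> w = of_nat t) \<longleftrightarrow> (\<exists>t. t < (L+1) div 2 \<and> w/2 = of_nat t) \<or> (\<exists>t. t < L div 2 \<and> (w-1)/2 = of_nat t)"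
  proof
    assume "\<exists>t. t < L \<and> w = of_nat t"
    then obtain t where t: "t < L" "w = of_nat t" by blast
    show "(\<exists>t. t < (L+1) div 2 \<and> w/2 = of_nat t) \<or> (\<exists>t. t < L div 2 \<and> (w-1)/2 = of_nat t)"
    proof (cases "even t")
      case True
      then obtain r where "t = 2*r" by blast
      then have "r < (L+1) div 2" "w/2 = of_nat r" using t by auto
      then show ?thesis by blast
    next
      case False
      then obtain r where "t = 2*r+1" using oddE by blast
      then have "r < L div 2" "(w-1)/2 = of_nat r" using t by auto
      then show ?thesis by blast
    qed
  next
    assume "(\<exists>t. t < (L+1) div 2 \<and> w/2 = of_nat t) \<or> (\<exists>t. t < L div 2 \<and> (w-1)/2 = of_nat t)"
    then show "\<exists>t. t < L \<and> w = of_nat t"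
    proof
      assume "\<exists>t. t < (L+1) div 2 \<and> w/2 = of_nat t"
      then obtain r where "r < (L+1) div 2" "w/2 = of_nat r" by blast
      then have "2*r < L" "w = of_nat (2*r)" by auto
      then show ?thesis by blast
    next
      assume "\<exists>t. t < L div 2 \<and> (w-1)/2 = of_nat t"
      then obtain r where "r < L div 2" "(w-1)/2 = of_nat r" by blast
      then have "2*r+1 < L" "w = of_nat (2*r+1)" by (auto simp: field_simps)
      then show ?thesis by blast
    qed
  qed
  have B: "\<not> ((\<exists>t. t < (L+1) div 2 \<and> w/2 = of_nat t) \<and> (\<exists>t. t < L div 2 \<and> (w-1)/2 = of_nat t))"
  proof
    assume "(\<exists>t. t < (L+1) div 2 \<and> w/2 = of_nat t) \<and> (\<exists>t. t < L div 2 \<and> (w-1)/2 = of_nat t)"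
    then obtain r r' where "w/2 = of_nat r" "(w-1)/2 = of_nat r'" by blast
    then have "(of_nat (2*r) :: complex) = of_nat (2*r'+1)" by (auto simp: field_simps)
    then have "2*r = 2*r'+1" using of_nat_eq_iff by blast
    then show False by presburger
  qed
  show ?thesis unfolding ind_def using A B by auto
qed

lemma lin_nz: "a \<noteq> 0 \<Longrightarrow> [: c, a :] \<noteq> (0::complex poly)" by simp

lemma order_lin: assumes "a \<noteq> 0" shows "order z [: c, a :] = (if a * z + c = 0 then 1 else 0)"
proof -
  have nz: "[: c, a :] \<noteq> 0" using assms by simp
  have "order z [: c, a :] \<le> 1" using order_degree[OF nz] assms by simp
  moreover have p: "poly [: c, a :] z = a * z + c" by (simp add: algebra_simps)
  ultimately show ?thesis
  proof (cases "a * z + c = 0")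
    case True
    then have "order z [: c, a :] \<noteq> 0" using order_root[of "[: c, a :]" z] nz p assms by auto
    then show ?thesis using True \<open>order z [: c, a :] \<le> 1\<close> by simp
  next
    case False then show ?thesis using order_0I[of "[: c, a :]" z] p by (simp add: algebra_simps)
  qed
qed

lemma order_prod: "finite A \<Longrightarrow> (\<And>x. x \<in> A \<Longrightarrow> f x \<noteq> (0::complex poly)) \<Longrightarrow>
   order z (\<Prod>x\<in>A. f x) = (\<Sum>x\<in>A. order z (f x))"
proof (induction A rule: finite_induct)
  case empty then show ?case by simp
next
  case (insert x F)
  have "f x * (\<Prod>x\<in>F. f x) \<noteq> 0" using insert by (simp add: prod_zero_iff)
  then show ?case using insert by (simp add: order_mult)
qed

lemma lpoch_nz: "a \<noteq> 0 \<Longrightarrow> lpoch a b m \<noteq> 0"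
  unfolding lpoch_def by (simp add: prod_zero_iff)

lemma order_lpoch: assumes "a \<noteq> 0" shows "order z (lpoch a b m) = ind (- (a * z + b)) m"
proof -
  have "order z (lpoch a b m) = (\<Sum>t<m. order z [: b + of_nat t, a :])"
    unfolding lpoch_def using assms by (intro order_prod) auto
  also have "\<dots> = (\<Sum>t<m. if a * z + b + of_nat t = 0 then 1 else 0)"
    using assms by (simp add: order_lin add.assoc)
  also have "\<dots> = card {t. t < m \<and> a * z + b + of_nat t = 0}"
    by (simp add: sum.If_cases Int_def)
  also have "\<dots> = ind (- (a * z + b)) m"
  proof (cases "\<exists>t. t < m \<and> a * z + b + of_nat t = 0")
    case True
    then obtain t where t: "t < m" "a * z + b + of_nat t = 0" by blast
    have "{t. t < m \<and> a * z + b + of_nat t = 0} = {t}"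
    proof safe
      fix t' assume "t' < m" "a * z + b + of_nat t' = 0"
      then have "(of_nat t' :: complex) = of_nat t" using t by (metis add_left_cancel)
      then show "t' = t" using of_nat_eq_iff by blast
    qed (use t in auto)
    moreover have "- (a * z + b) = of_nat t" using t
      by (simp add: algebra_simps add_eq_0_iff2)
    ultimately show ?thesis using t unfolding ind_def by auto
  next
    case False
    have "\<not> (\<exists>t. t < m \<and> - (a * z + b) = of_nat t)"
    proof
      assume "\<exists>t. t < m \<and> - (a * z + b) = of_nat t"
      then obtain t where "t < m" "- (a * z + b) = of_nat t" by blast
      then have "a * z + b + of_nat t = 0" by (metis add.right_inverse)
      then show False using False \<open>t < m\<close> by blast
    qed
    moreover have "{t. t < m \<and> a * z + b + of_nat t = 0} = {}" using False by auto
    ultimately show ?thesis unfolding ind_def by (simp only: card.empty if_False)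
  qed
  finally show ?thesis .
qed




lemma kx_mono: assumes "sorted_wrt (\<ge>) ks" "1 \<le> i" "i \<le> j" shows "kx ks j \<le> kx ks i"
proof (cases "j \<le> length ks")
  case True
  show ?thesis
  proof (cases "i = j")
    case False
    then have "i - 1 < j - 1" "j - 1 < length ks" using assms True by auto
    then have "ks ! (j - 1) \<le> ks ! (i - 1)" using sorted_wrt_nth_less[OF assms(1)] by blast
    then show ?thesis using assms True by (simp add: kx_def)
  qed simp
next
  case False then show ?thesis by (simp add: kx_def)
qed

lemma kx_beyond: "length ks < i \<Longrightarrow> kx ks i = 0" by (simp add: kx_def)

lemma phi1_set_finite: "finite {kx ks i + kx ks j | i j. 1 \<le> i \<and> i < j \<and> j \<le> length ks + 1 \<and> i + j = 2 * a + 1}"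
proof -
  have "{kx ks i + kx ks j | i j. 1 \<le> i \<and> i < j \<and> j \<le> length ks + 1 \<and> i + j = 2 * a + 1}
     \<subseteq> (\<lambda>(i,j). kx ks i + kx ks j) ` ({0..length ks + 1} \<times> {0..length ks + 1})" by force
  then show ?thesis by (rule finite_subset) auto
qed

lemma phi1_le: assumes "1 \<le> i" "i < j" "j \<le> length ks + 1" "i + j = 2 * a + 1"
  shows "phi1 ks a \<le> kx ks i + kx ks j"
proof -
  let ?S = "{kx ks i + kx ks j | i j. 1 \<le> i \<and> i < j \<and> j \<le> length ks + 1 \<and> i + j = 2 * a + 1}"
  have a: "1 \<le> a \<and> a \<le> length ks" using assms by auto
  have e: "phi1 ks a = Min ?S" unfolding phi1_def using a by simp
  have m: "kx ks i + kx ks j \<in> ?S" using assms by blast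
  show ?thesis unfolding e by (rule Min_le[OF phi1_set_finite m])
qed

lemma phi1_ex: assumes "1 \<le> a" "a \<le> length ks"
  shows "\<exists>i j. 1 \<le> i \<and> i < j \<and> j \<le> length ks + 1 \<and> i + j = 2 * a + 1 \<and> phi1 ks a = kx ks i + kx ks j"
proof -
  let ?S = "{kx ks i + kx ks j | i j. 1 \<le> i \<and> i < j \<and> j \<le> length ks + 1 \<and> i + j = 2 * a + 1}"
  have w: "1 \<le> a" "a < a + 1" "a + 1 \<le> length ks + 1" "a + (a + 1) = 2 * a + 1" using assms by auto
  have ne: "?S \<noteq> {}" using w by blast
  have e: "phi1 ks a = Min ?S" unfolding phi1_def using assms by simp
  have "Min ?S \<in> ?S" using Min_in[OF phi1_set_finite ne] .
  then show ?thesis unfolding e by blast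
qed

lemma phi2_set_finite: "finite {(kx ks i + kx ks j) div 2 | i j. 1 \<le> i \<and> i \<le> j \<and> j \<le> length ks + 1 \<and> i + j = a + 1}"
proof -
  have "{(kx ks i + kx ks j) div 2 | i j. 1 \<le> i \<and> i \<le> j \<and> j \<le> length ks + 1 \<and> i + j = a + 1}
     \<subseteq> (\<lambda>(i,j). (kx ks i + kx ks j) div 2) ` ({0..length ks + 1} \<times> {0..length ks + 1})" by force
  then show ?thesis by (rule finite_subset) auto
qed

lemma phi2_le: assumes "1 \<le> i" "i \<le> j" "j \<le> length ks + 1" "i + j = a + 1" "1 \<le> a" "a \<le> 2 * length ks"
  shows "phi2 ks a \<le> (kx ks i + kx ks j) div 2"
proof -
  let ?S = "{(kx ks i + kx ks j) div 2 | i j. 1 \<le> i \<and> i \<le> j \<and> j \<le> length ks + 1 \<and> i + j = a + 1}"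
  have e: "phi2 ks a = Min ?S" unfolding phi2_def using assms by simp
  have m: "(kx ks i + kx ks j) div 2 \<in> ?S" using assms by blast
  show ?thesis unfolding e by (rule Min_le[OF phi2_set_finite m])
qed

lemma phi2_ex: assumes "1 \<le> a" "a \<le> 2 * length ks"
  shows "\<exists>i j. 1 \<le> i \<and> i \<le> j \<and> j \<le> length ks + 1 \<and> i + j = a + 1 \<and> phi2 ks a = (kx ks i + kx ks j) div 2"
proof -
  let ?S = "{(kx ks i + kx ks j) div 2 | i j. 1 \<le> i \<and> i \<le> j \<and> j \<le> length ks + 1 \<and> i + j = a + 1}"
  have w: "1 \<le> (a+1) div 2" "(a+1) div 2 \<le> a+1-(a+1) div 2" "a+1-(a+1) div 2 \<le> length ks+1" "(a+1) div 2 + (a+1-(a+1) div 2) = a+1"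
    using assms by presburger+
  have ne: "?S \<noteq> {}" using w by blast
  have e: "phi2 ks a = Min ?S" unfolding phi2_def using assms by simp
  have "Min ?S \<in> ?S" using Min_in[OF phi2_set_finite ne] .
  then show ?thesis unfolding e by blast
qed

lemma order_gpoch: "order z (gpoch d s mv) = (\<Sum>j\<in>{1..s}. ind (complex_of_real (d / 2 * (real j - 1)) - z) (mv j))"
  unfolding gpoch_def by (subst order_prod) (auto simp: lpoch_nz order_lpoch)

lemma gpoch_nz: "gpoch d s mv \<noteq> 0"
  unfolding gpoch_def by (auto simp: prod_zero_iff lpoch_nz)

lemma order_dprod: "order z (\<Prod>i\<in>{1..n::nat}. \<Prod>j\<in>{i+1..m::nat}. lpoch a (b i j) (L i j)) =
   (\<Sum>i\<in>{1..n}. \<Sum>j\<in>{i+1..m}. order z (lpoch a (b i j) (L i j)))" if "a \<noteq> 0"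
  using that by (subst order_prod) (auto simp: prod_zero_iff lpoch_nz intro!: sum.cong order_prod)




definition "P1 d ks z i j = ind (complex_of_real (d/4*(real (i+j) - 2)) - z - of_nat (kx ks i + kx ks (j+1))) (kx ks j - kx ks (j+1))"
definition "Dd1 d ks z i = ind (complex_of_real (d/2*(real i - 1)) - z) (kx ks i + kx ks (i+1))"
definition "G1 d ks z a = ind (complex_of_real (d/2*(real a - 1)) - z) (phi1 ks a)"
definition "Q1 d ks z i = ind (complex_of_real (d/2*(real i - 1)) - z - of_nat (phi1 ks i)) (kx ks i + kx ks (i+1) - phi1 ks i)"
definition "SA1 d ks z = (\<Sum>i\<in>{1..length ks}. \<Sum>j\<in>{i+1..length ks}. ind (complex_of_real (d/4*(real (i+j) - 2)) - z) (kx ks i + kx ks (j+1)))"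

lemma ordN1: assumes "sorted_wrt (\<ge>) ks"
  shows "order z (C1b_num d ks) = SA1 d ks z + (\<Sum>i\<in>{1..length ks}. \<Sum>j\<in>{i+1..length ks}. P1 d ks z i j)"
proof -
  have "order z (C1b_num d ks) = (\<Sum>i\<in>{1..length ks}. \<Sum>j\<in>{i+1..length ks}.
       ind (complex_of_real (d/4*(real (i+j) - 2)) - z) (kx ks i + kx ks j))"
    unfolding C1b_num_def by (subst order_dprod) (simp_all add: order_lpoch)
  also have "\<dots> = (\<Sum>i\<in>{1..length ks}. \<Sum>j\<in>{i+1..length ks}.
       ind (complex_of_real (d/4*(real (i+j) - 2)) - z) (kx ks i + kx ks (j+1)) + P1 d ks z i j)"
  proof (intro sum.cong refl)
    fix i j assume "i \<in> {1..length ks}" "j \<in> {i+1..length ks}"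
    then have "kx ks (j+1) \<le> kx ks j" using kx_mono[OF assms, of j "j+1"] by auto
    then have le: "kx ks i + kx ks (j+1) \<le> kx ks i + kx ks j" by simp
    show "ind (complex_of_real (d/4*(real (i+j) - 2)) - z) (kx ks i + kx ks j) =
       ind (complex_of_real (d/4*(real (i+j) - 2)) - z) (kx ks i + kx ks (j+1)) + P1 d ks z i j"
      unfolding P1_def using ind_split'[OF le] le by simp
  qed
  finally show ?thesis unfolding SA1_def by (simp add: sum.distrib)
qed

lemma ordD1: "order z (C1b_den d ks) = (\<Sum>i\<in>{1..length ks}. Dd1 d ks z i) + SA1 d ks z"
proof -
  let ?X = "\<lambda>i j. ind (complex_of_real (d/4*(real (i+j) - 3)) - z) (kx ks i + kx ks j)"
  have "order z (C1b_den d ks) = (\<Sum>i\<in>{1..length ks + 1}. \<Sum>j\<in>{i+1..length ks + 1}. ?X i j)"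
    unfolding C1b_den_def by (subst order_dprod) (simp_all add: order_lpoch)
  also have "\<dots> = (\<Sum>i\<in>{1..length ks}. \<Sum>j\<in>{Suc i..Suc (length ks)}. ?X i j)"
    by simp
  also have "\<dots> = (\<Sum>i\<in>{1..length ks}. Dd1 d ks z i + (\<Sum>j\<in>{Suc i..length ks}. ?X i (Suc j)))"
  proof (intro sum.cong refl)
    fix i assume i: "i \<in> {1..length ks}"
    have "(\<Sum>j\<in>{Suc i..Suc (length ks)}. ?X i j) = ?X i (Suc i) + (\<Sum>j\<in>{Suc (Suc i)..Suc (length ks)}. ?X i j)"
      using i by (intro sum.atLeast_Suc_atMost) auto
    also have "(\<Sum>j\<in>{Suc (Suc i)..Suc (length ks)}. ?X i j) = (\<Sum>j\<in>{Suc i..length ks}. ?X i (Suc j))"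
      by (rule sum.shift_bounds_cl_Suc_ivl)
    also have "?X i (Suc i) = Dd1 d ks z i"
    proof -
      have e: "d/4*(real (i + Suc i) - 3) = d/2*(real i - 1)" by (simp add: field_simps)
      show ?thesis unfolding Dd1_def by (simp only: e) (simp only: Suc_eq_plus1)
    qed
    finally show "(\<Sum>j\<in>{Suc i..Suc (length ks)}. ?X i j) = Dd1 d ks z i + (\<Sum>j\<in>{Suc i..length ks}. ?X i (Suc j))" .
  qed
  also have "\<dots> = (\<Sum>i\<in>{1..length ks}. Dd1 d ks z i) + SA1 d ks z"
  proof -
    have "(\<Sum>i\<in>{1..length ks}. \<Sum>j\<in>{Suc i..length ks}. ?X i (Suc j)) = SA1 d ks z"
      unfolding SA1_def
    proof (intro sum.cong refl)
      fix i j
      have e: "d/4*(real (i + Suc j) - 3) = d/4*(real (i+j) - 2)" by (simp add: field_simps)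
      show "?X i (Suc j) = ind (complex_of_real (d/4*(real (i+j) - 2)) - z) (kx ks i + kx ks (j+1))" by (simp only: e) (simp only: Suc_eq_plus1)
    qed simp
    then show ?thesis by (simp add: sum.distrib)
  qed
  finally show ?thesis .
qed

lemma Dd1_split: assumes "1 \<le> i" "i \<le> length ks" shows "Dd1 d ks z i = G1 d ks z i + Q1 d ks z i"
proof -
  have le: "phi1 ks i \<le> kx ks i + kx ks (i+1)" by (rule phi1_le) (use assms in auto)
  show ?thesis unfolding Dd1_def G1_def Q1_def using ind_split'[OF le] .
qed

lemma main_id1: assumes "sorted_wrt (\<ge>) ks"
  shows "order z (gpoch d (length ks) (phi1 ks) * C1b_num d ks) + (\<Sum>i\<in>{1..length ks}. Q1 d ks z i)
       = order z (C1b_den d ks) + (\<Sum>i\<in>{1..length ks}. \<Sum>j\<in>{i+1..length ks}. P1 d ks z i j)"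
proof -
  have nz: "gpoch d (length ks) (phi1 ks) * C1b_num d ks \<noteq> 0"
    using gpoch_nz unfolding C1b_num_def by (auto simp: prod_zero_iff lpoch_nz)
  have g: "order z (gpoch d (length ks) (phi1 ks)) = (\<Sum>i\<in>{1..length ks}. G1 d ks z i)"
    unfolding order_gpoch G1_def by simp
  have "(\<Sum>i\<in>{1..length ks}. Dd1 d ks z i) = (\<Sum>i\<in>{1..length ks}. G1 d ks z i) + (\<Sum>i\<in>{1..length ks}. Q1 d ks z i)"
    by (simp add: Dd1_split sum.distrib[symmetric])
  then show ?thesis using order_mult[OF nz] g ordN1[OF assms] ordD1 by simp
qed




lemma cx: assumes "complex_of_real c - z - of_nat K = of_nat t" shows "z = complex_of_real (c - real K - real t)"
proof -
  have "z = complex_of_real c - of_nat K - of_nat t" using assms by (simp add: algebra_simps)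
  then show ?thesis by simp
qed

lemma cx0: assumes "complex_of_real c - z = of_nat t" shows "z = complex_of_real (c - real t)"
  using cx[of c z 0 t] assms by simp

lemma dsum_single:
  fixes f :: "nat \<Rightarrow> nat \<Rightarrow> nat"
  assumes "\<And>i j. i \<in> {1..n} \<Longrightarrow> j \<in> {i+1..m} \<Longrightarrow> f i j \<noteq> 0 \<Longrightarrow> i = i0 \<and> j = j0"
  shows "(\<Sum>i\<in>{1..n}. \<Sum>j\<in>{i+1..m}. f i j) \<le> f i0 j0"
proof -
  have "(\<Sum>i\<in>{1..n}. \<Sum>j\<in>{i+1..m}. f i j) \<le> (\<Sum>i\<in>{1..n}. if i = i0 then f i0 j0 else 0)"
  proof (rule sum_mono)
    fix i assume i: "i \<in> {1..n}"
    show "(\<Sum>j\<in>{i+1..m}. f i j) \<le> (if i = i0 then f i0 j0 else 0)"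
    proof (cases "i = i0")
      case True
      have "(\<Sum>j\<in>{i+1..m}. f i j) = (\<Sum>j\<in>{i+1..m}. if j = j0 then f i0 j0 else 0)"
        using assms i True by (intro sum.cong refl) (metis)
      also have "\<dots> \<le> f i0 j0" by (simp add: sum.delta)
      finally show ?thesis using True by simp
    next
      case False
      have "(\<Sum>j\<in>{i+1..m}. f i j) = 0" using assms i False by (intro sum.neutral) blast
      then show ?thesis by simp
    qed
  qed
  also have "\<dots> \<le> f i0 j0" by (simp add: sum.delta)
  finally show ?thesis .
qed

lemma dsum_zero:
  fixes f :: "nat \<Rightarrow> nat \<Rightarrow> nat"
  assumes "\<And>i j. i \<in> {1..n} \<Longrightarrow> j \<in> {i+1..m} \<Longrightarrow> f i j = 0"
  shows "(\<Sum>i\<in>{1..n}. \<Sum>j\<in>{i+1..m}. f i j) = 0"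
  using assms by (intro sum.neutral ballI) auto

lemma dsum_pos:
  fixes f :: "nat \<Rightarrow> nat \<Rightarrow> nat"
  assumes "(\<Sum>i\<in>{1..n}. \<Sum>j\<in>{i+1..m}. f i j) \<noteq> 0"
  shows "\<exists>i j. i \<in> {1..n} \<and> j \<in> {i+1..m} \<and> f i j \<noteq> 0"
proof (rule ccontr)
  assume "\<not> ?thesis"
  then have "(\<Sum>i\<in>{1..n}. \<Sum>j\<in>{i+1..m}. f i j) = 0" by (intro dsum_zero) blast
  then show False using assms by simp
qed

lemma P1_nz: assumes "P1 d ks z i j \<noteq> 0"
  shows "\<exists>t. t < kx ks j - kx ks (j+1) \<and> z = complex_of_real (d/4*(real (i+j) - 2) - real (kx ks i + kx ks (j+1)) - real t)"
  using ind_nz[OF assms[unfolded P1_def]] cx by blast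

lemma P1_len: "P1 d ks z i j \<noteq> 0 \<Longrightarrow> kx ks (j+1) < kx ks j"
  using P1_nz by fastforce




lemma ind_0[simp]: "ind w 0 = 0" by (simp add: ind_def)

lemma C1b_zero_gt: assumes "sorted_wrt (\<ge>) ks"
  and "z \<in> rat_zeros (gpoch d (length ks) (phi1 ks) * C1b_num d ks) (C1b_den d ks)"
  shows "(\<Sum>i\<in>{1..length ks}. Q1 d ks z i) < (\<Sum>i\<in>{1..length ks}. \<Sum>j\<in>{i+1..length ks}. P1 d ks z i j)"
  using main_id1[OF assms(1), of z d] assms(2) unfolding rat_zeros_def by simp

lemma C1b_some: assumes "sorted_wrt (\<ge>) ks"
  and "z \<in> rat_zeros (gpoch d (length ks) (phi1 ks) * C1b_num d ks) (C1b_den d ks)"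
  shows "\<exists>i j. i \<in> {1..length ks} \<and> j \<in> {i+1..length ks} \<and> P1 d ks z i j \<noteq> 0"
proof -
  have "(\<Sum>i\<in>{1..length ks}. \<Sum>j\<in>{i+1..length ks}. P1 d ks z i j) \<noteq> 0" using C1b_zero_gt[OF assms] by linarith
  then show ?thesis by (rule dsum_pos)
qed

lemma C1b_some_other: assumes "sorted_wrt (\<ge>) ks"
  and "z \<in> rat_zeros (gpoch d (length ks) (phi1 ks) * C1b_num d ks) (C1b_den d ks)"
  and "P1 d ks z i0 j0 \<le> (\<Sum>i\<in>{1..length ks}. Q1 d ks z i)"
  shows "\<exists>i j. i \<in> {1..length ks} \<and> j \<in> {i+1..length ks} \<and> P1 d ks z i j \<noteq> 0 \<and> \<not> (i = i0 \<and> j = j0)"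
proof (rule ccontr)
  assume "\<not> ?thesis"
  then have "(\<Sum>i\<in>{1..length ks}. \<Sum>j\<in>{i+1..length ks}. P1 d ks z i j) \<le> P1 d ks z i0 j0"
    by (intro dsum_single) blast
  then show False using C1b_zero_gt[OF assms(1,2)] assms(3) by simp
qed

lemma C1b_pair_bounds:
  assumes d: "d > 0" and s: "sorted_wrt (\<ge>) ks" and nz: "P1 d ks z i j \<noteq> 0"
    and ij: "1 \<le> i" "i < j"
    and m2: "2 \<le> m2" "kx ks (m2 + 1) = 0"
  shows "\<exists>x. z = complex_of_real x \<and> x \<le> d/4*(2*real m2 - 3) - real (kx ks (m2 - 1))
     \<and> d/4*(real (i+j) - 2) - real (kx ks i) - real (kx ks j) + 1 \<le> x \<and> j \<le> m2 \<and> kx ks (j+1) < kx ks j"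
proof -
  obtain t where t: "t < kx ks j - kx ks (j+1)"
    and z: "z = complex_of_real (d/4*(real (i+j) - 2) - real (kx ks i + kx ks (j+1)) - real t)"
    using P1_nz[OF nz] by blast
  have lt: "kx ks (j+1) < kx ks j" using t by simp
  have jm: "j \<le> m2"
  proof (rule ccontr)
    assume "\<not> j \<le> m2"
    then have "kx ks j \<le> kx ks (m2+1)" using kx_mono[OF s, of "m2+1" j] by simp
    then show False using lt m2 by simp
  qed
  have ki: "kx ks (m2 - 1) \<le> kx ks i" using kx_mono[OF s, of i "m2-1"] ij jm by simp
  have "real (i+j) \<le> 2 * real m2 - 1" using ij jm by linarith
  then have A: "d/4*(real (i+j) - 2) \<le> d/4*(2*real m2 - 3)" using d by (intro mult_left_mono) auto
  have tt: "real t + 1 \<le> real (kx ks j) - real (kx ks (j+1))" using t lt by linarith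
  define x where "x = d/4*(real (i+j) - 2) - real (kx ks i + kx ks (j+1)) - real t"
  have "x \<le> d/4*(2*real m2 - 3) - real (kx ks (m2 - 1))" unfolding x_def using A ki by simp
  moreover have "d/4*(real (i+j) - 2) - real (kx ks i) - real (kx ks j) + 1 \<le> x" unfolding x_def using tt by simp
  ultimately show ?thesis using z jm lt unfolding x_def by blast
qed

lemma ceil_even: "real_of_int \<lceil>real (2 * b) / 2\<rceil> = real b" by simp
lemma ceil_odd: "real_of_int \<lceil>real (2 * b + 1) / 2\<rceil> = real b + 1"
proof -
  have "\<lceil>real (2 * b + 1) / 2\<rceil> = int b + 1"
    by (rule ceiling_unique) auto
  then show ?thesis by simp
qed

lemma C1b_strict:
  assumes d: "d > 0" and s: "sorted_wrt (\<ge>) ks"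
    and m: "2 \<le> m1" "m1 \<le> m2" "m2 \<le> length ks"
    and eqk: "\<forall>a. 2 \<le> a \<and> a \<le> m1 \<longrightarrow> kx ks a = kx ks 2" and z0: "kx ks (m2 + 1) = 0"
    and h: "kx ks 1 > kx ks 2 \<and> kx ks 2 > 0"
  shows "rat_zeros (gpoch d (length ks) (phi1 ks) * C1b_num d ks) (C1b_den d ks)
          \<subseteq> complex_of_real ` {d / 4 * (real m1 - 1) - real (kx ks 1 + kx ks 2) + 1 ..
                                  d / 4 * (2 * real m2 - 3) - real (kx ks (m2 - 1))}"
proof -
  let ?n = "length ks"
  let ?Z = "rat_zeros (gpoch d (length ks) (phi1 ks) * C1b_num d ks) (C1b_den d ks)"
  have jge: "m1 \<le> j" if "P1 d ks z i j \<noteq> 0" "1 \<le> i" "i < j" for z i j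
  proof (rule ccontr)
    assume "\<not> m1 \<le> j"
    then have jj: "2 \<le> j" "j \<le> m1" "2 \<le> j+1" "j+1 \<le> m1" using that by auto
    have "kx ks j = kx ks 2" using eqk jj(1,2) by blast
    moreover have "kx ks (j+1) = kx ks 2" using eqk jj(3,4) by blast
    ultimately show False using P1_len[OF that(1)] by simp
  qed
  have k1: "kx ks i \<le> kx ks 1" if "1 \<le> i" for i using kx_mono[OF s, of 1 i] that by simp
  have k2: "kx ks j \<le> kx ks 2" if "2 \<le> j" for j using kx_mono[OF s, of 2 j] that by simp
    show "?Z \<subseteq> complex_of_real ` {d / 4 * (real m1 - 1) - real (kx ks 1 + kx ks 2) + 1 ..
                                  d / 4 * (2 * real m2 - 3) - real (kx ks (m2 - 1))}"
    proof
      fix z assume zZ: "z \<in> ?Z"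
      obtain i j where ij: "i \<in> {1..?n}" "j \<in> {i+1..?n}" "P1 d ks z i j \<noteq> 0" using C1b_some[OF s zZ] by blast
      obtain x where x: "z = complex_of_real x" "x \<le> d/4*(2*real m2 - 3) - real (kx ks (m2 - 1))"
        "d/4*(real (i+j) - 2) - real (kx ks i) - real (kx ks j) + 1 \<le> x"
        using C1b_pair_bounds[OF d s ij(3), of m2] ij m z0 by auto
      have "m1 \<le> j" using jge[OF ij(3)] ij by auto
      then have "real m1 - 1 \<le> real (i+j) - 2" using ij by auto
      then have "d/4*(real m1 - 1) \<le> d/4*(real (i+j) - 2)" using d by (intro mult_left_mono) auto
      moreover have "kx ks i \<le> kx ks 1" "kx ks j \<le> kx ks 2" using ij k1 k2 by auto
      ultimately have "d / 4 * (real m1 - 1) - real (kx ks 1 + kx ks 2) + 1 \<le> x" using x by simp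
      then show "z \<in> complex_of_real ` {d / 4 * (real m1 - 1) - real (kx ks 1 + kx ks 2) + 1 ..
                                  d / 4 * (2 * real m2 - 3) - real (kx ks (m2 - 1))}" using x by auto
    qed
qed

lemma C1b_eq:
  assumes d: "d > 0" and s: "sorted_wrt (\<ge>) ks"
    and m: "2 \<le> m1" "m1 \<le> m2" "m2 \<le> length ks"
    and eqk: "\<forall>a. 2 \<le> a \<and> a \<le> m1 \<longrightarrow> kx ks a = kx ks 2" and z0: "kx ks (m2 + 1) = 0"
    and h: "kx ks 1 = kx ks 2 \<and> kx ks 2 > 0"
  shows "rat_zeros (gpoch d (length ks) (phi1 ks) * C1b_num d ks) (C1b_den d ks)
          \<subseteq> complex_of_real ` {d / 4 * (2 * real_of_int \<lceil>real m1 / 2\<rceil> - 1) - real (kx ks 1 + kx ks 2) + 1 ..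
                                  d / 4 * (2 * real m2 - 3) - real (kx ks (m2 - 1))}"
proof -
  let ?n = "length ks"
  let ?Z = "rat_zeros (gpoch d (length ks) (phi1 ks) * C1b_num d ks) (C1b_den d ks)"
  have jge: "m1 \<le> j" if "P1 d ks z i j \<noteq> 0" "1 \<le> i" "i < j" for z i j
  proof (rule ccontr)
    assume "\<not> m1 \<le> j"
    then have jj: "2 \<le> j" "j \<le> m1" "2 \<le> j+1" "j+1 \<le> m1" using that by auto
    have "kx ks j = kx ks 2" using eqk jj(1,2) by blast
    moreover have "kx ks (j+1) = kx ks 2" using eqk jj(3,4) by blast
    ultimately show False using P1_len[OF that(1)] by simp
  qed
  have k1: "kx ks i \<le> kx ks 1" if "1 \<le> i" for i using kx_mono[OF s, of 1 i] that by simp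
  have k2: "kx ks j \<le> kx ks 2" if "2 \<le> j" for j using kx_mono[OF s, of 2 j] that by simp
    show "?Z \<subseteq> complex_of_real ` {d / 4 * (2 * real_of_int \<lceil>real m1 / 2\<rceil> - 1) - real (kx ks 1 + kx ks 2) + 1 ..
                                  d / 4 * (2 * real m2 - 3) - real (kx ks (m2 - 1))}"
    proof
      fix z assume zZ: "z \<in> ?Z"
      have "\<exists>i j. i \<in> {1..?n} \<and> j \<in> {i+1..?n} \<and> P1 d ks z i j \<noteq> 0 \<and>
             d/4*(2 * real_of_int \<lceil>real m1 / 2\<rceil> - 1) \<le> d/4*(real (i+j) - 2)"
      proof (cases "even m1")
        case True
        then obtain b where b: "m1 = 2 * b" by blast
        obtain i j where ij: "i \<in> {1..?n}" "j \<in> {i+1..?n}" "P1 d ks z i j \<noteq> 0" using C1b_some[OF s zZ] by blast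
        have "m1 \<le> j" using jge[OF ij(3)] ij by auto
        then have "2 * real_of_int \<lceil>real m1 / 2\<rceil> - 1 \<le> real (i+j) - 2" using ij b ceil_even[of b] by auto
        then have "d/4*(2 * real_of_int \<lceil>real m1 / 2\<rceil> - 1) \<le> d/4*(real (i+j) - 2)" using d by (intro mult_left_mono) auto
        then show ?thesis using ij by blast
      next
        case False
        then obtain b where b: "m1 = 2 * b + 1" using oddE by blast
        have b1: "1 \<le> b" using b m by auto
        let ?a = "b + 1"
        have kk: "kx ks a = kx ks 1" if "1 \<le> a" "a \<le> m1" for a
        proof (cases "a = 1")
          case False
          then have "2 \<le> a" "a \<le> m1" using that by auto
          then show ?thesis using eqk h by metis
        qed simp
        have phi: "phi1 ks ?a = kx ks 1 + kx ks (m1 + 1)"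
        proof (rule antisym)
          show "phi1 ks ?a \<le> kx ks 1 + kx ks (m1 + 1)" by (rule phi1_le) (use b m in auto)
          obtain i j where ij: "1 \<le> i" "i < j" "j \<le> ?n + 1" "i + j = 2 * ?a + 1" "phi1 ks ?a = kx ks i + kx ks j"
            using phi1_ex[of ?a ks] b m by auto
          show "kx ks 1 + kx ks (m1 + 1) \<le> phi1 ks ?a"
          proof (cases "i = 1")
            case True then have "j = m1 + 1" using ij b by auto
            then show ?thesis using ij True by simp
          next
            case False
            then have r: "1 \<le> i" "i \<le> m1" "1 \<le> j" "j \<le> m1" using ij b by auto
            have "kx ks i = kx ks 1" "kx ks j = kx ks 1" using kk[OF r(1,2)] kk[OF r(3,4)] by auto
            moreover have "kx ks (m1 + 1) \<le> kx ks 1" using k1 by simp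
            ultimately show ?thesis using ij by simp
          qed
        qed
        have eqPQ: "P1 d ks z 1 m1 = Q1 d ks z ?a"
        proof -
          have e1: "d/4*(real (1+m1) - 2) = d/2*(real ?a - 1)" using b by (simp add: field_simps)
          have e2: "kx ks ?a + kx ks (?a+1) - phi1 ks ?a = kx ks m1 - kx ks (m1+1)"
            using phi kk[of ?a] kk[of "?a+1"] kk[of m1] b b1 by (simp del: kx_def)
          show ?thesis unfolding P1_def Q1_def by (simp only: e1 e2) (simp only: phi)
        qed
        have "Q1 d ks z ?a \<le> (\<Sum>i\<in>{1..?n}. Q1 d ks z i)"
          by (rule member_le_sum) (use b m in auto)
        then obtain i j where ij: "i \<in> {1..?n}" "j \<in> {i+1..?n}" "P1 d ks z i j \<noteq> 0" "\<not> (i = 1 \<and> j = m1)"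
          using C1b_some_other[OF s zZ, of 1 m1] eqPQ by auto
        have "m1 \<le> j" using jge[OF ij(3)] ij by auto
        then have "real m1 \<le> real (i+j) - 2" using ij by auto
        then have "2 * real_of_int \<lceil>real m1 / 2\<rceil> - 1 \<le> real (i+j) - 2" using b ceil_odd[of b] by simp
        then have "d/4*(2 * real_of_int \<lceil>real m1 / 2\<rceil> - 1) \<le> d/4*(real (i+j) - 2)" using d by (intro mult_left_mono) auto
        then show ?thesis using ij by blast
      qed
      then obtain i j where ij: "i \<in> {1..?n}" "j \<in> {i+1..?n}" "P1 d ks z i j \<noteq> 0"
        and A: "d/4*(2 * real_of_int \<lceil>real m1 / 2\<rceil> - 1) \<le> d/4*(real (i+j) - 2)" by blast
      obtain x where x: "z = complex_of_real x" "x \<le> d/4*(2*real m2 - 3) - real (kx ks (m2 - 1))"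
        "d/4*(real (i+j) - 2) - real (kx ks i) - real (kx ks j) + 1 \<le> x"
        using C1b_pair_bounds[OF d s ij(3), of m2] ij m z0 by auto
      have "kx ks i \<le> kx ks 1" "kx ks j \<le> kx ks 2" using ij k1 k2 by auto
      then have "d / 4 * (2 * real_of_int \<lceil>real m1 / 2\<rceil> - 1) - real (kx ks 1 + kx ks 2) + 1 \<le> x" using x A by simp
      then show "z \<in> complex_of_real ` {d / 4 * (2 * real_of_int \<lceil>real m1 / 2\<rceil> - 1) - real (kx ks 1 + kx ks 2) + 1 ..
                                  d / 4 * (2 * real m2 - 3) - real (kx ks (m2 - 1))}" using x by auto
    qed
qed

lemma C1b_empty:
  assumes d: "d > 0" and s: "sorted_wrt (\<ge>) ks"
    and m: "2 \<le> m1" "m1 \<le> m2" "m2 \<le> length ks"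
    and eqk: "\<forall>a. 2 \<le> a \<and> a \<le> m1 \<longrightarrow> kx ks a = kx ks 2" and z0: "kx ks (m2 + 1) = 0"
    and h: "kx ks 2 = 0"
  shows "rat_zeros (gpoch d (length ks) (phi1 ks) * C1b_num d ks) (C1b_den d ks) = {}"
proof -
  let ?n = "length ks"
  let ?Z = "rat_zeros (gpoch d (length ks) (phi1 ks) * C1b_num d ks) (C1b_den d ks)"
  have jge: "m1 \<le> j" if "P1 d ks z i j \<noteq> 0" "1 \<le> i" "i < j" for z i j
  proof (rule ccontr)
    assume "\<not> m1 \<le> j"
    then have jj: "2 \<le> j" "j \<le> m1" "2 \<le> j+1" "j+1 \<le> m1" using that by auto
    have "kx ks j = kx ks 2" using eqk jj(1,2) by blast
    moreover have "kx ks (j+1) = kx ks 2" using eqk jj(3,4) by blast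
    ultimately show False using P1_len[OF that(1)] by simp
  qed
  have k1: "kx ks i \<le> kx ks 1" if "1 \<le> i" for i using kx_mono[OF s, of 1 i] that by simp
  have k2: "kx ks j \<le> kx ks 2" if "2 \<le> j" for j using kx_mono[OF s, of 2 j] that by simp
    show "?Z = {}"
    proof (rule ccontr)
      assume "?Z \<noteq> {}"
      then obtain z where zZ: "z \<in> ?Z" by blast
      obtain i j where ij: "i \<in> {1..?n}" "j \<in> {i+1..?n}" "P1 d ks z i j \<noteq> 0" using C1b_some[OF s zZ] by blast
      have "kx ks j = 0" using k2[of j] ij h by auto
      then show False using P1_len[OF ij(3)] by simp
    qed
qed




lemma phi1_holo_cond: assumes s: "sorted_wrt (\<ge>) ks" and m: "1 \<le> m" "m + 1 \<le> length ks"
  and p0: "phi1 ks (m+1) = 0" and p1: "phi1 ks m \<noteq> 0"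
  shows "kx ks (m+1) = 0" "0 < kx ks m"
proof -
  obtain i j where ij: "1 \<le> i" "i < j" "j \<le> length ks + 1" "i + j = 2 * (m+1) + 1" "phi1 ks (m+1) = kx ks i + kx ks j"
    using phi1_ex[of "m+1" ks] m by auto
  have "kx ks i = 0" using ij p0 by simp
  moreover have "kx ks (m+1) \<le> kx ks i" using kx_mono[OF s, of i "m+1"] ij by simp
  ultimately show k0: "kx ks (m+1) = 0" by simp
  show "0 < kx ks m"
  proof (rule ccontr)
    assume "\<not> 0 < kx ks m"
    then have "phi1 ks m \<le> 0" using phi1_le[of m "m+1" ks m] m k0 by simp
    then show False using p1 by simp
  qed
qed

lemma C1b_holo:
  assumes d: "d > 0" and s: "sorted_wrt (\<ge>) ks" and m: "1 \<le> m" "m \<le> length ks - 1"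
  and p0: "phi1 ks (m+1) = 0" and p1: "phi1 ks m \<noteq> 0"
  shows "rat_holo_nonzero_at (C1b_num d ks) (C1b_den d ks) (complex_of_real (d / 2 * real m)) \<and>
      rat_pole_at (C1b_num d ks) (C1b_den d ks) (complex_of_real (d / 2 * (real m - 1)))"
proof -
  let ?n = "length ks"
  have m': "m + 1 \<le> ?n" using m by simp
  note c = phi1_holo_cond[OF s m(1) m' p0 p1]
  have Pz: "P1 d ks (complex_of_real y) i j = 0" if y: "d/4*(2*real m - 3) < y" and ij: "1 \<le> i" "i < j" for y i j
  proof (rule ccontr)
    assume nz: "P1 d ks (complex_of_real y) i j \<noteq> 0"
    have lt: "kx ks (j+1) < kx ks j" by (rule P1_len[OF nz])
    have "j \<le> m"
    proof (rule ccontr)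
      assume "\<not> j \<le> m"
      then have "kx ks j \<le> kx ks (m+1)" using kx_mono[OF s, of "m+1" j] by simp
      then show False using lt c by simp
    qed
    then have m2: "2 \<le> m" using ij by simp
    obtain x where x: "complex_of_real y = complex_of_real x" "x \<le> d/4*(2*real m - 3) - real (kx ks (m - 1))"
      using C1b_pair_bounds[OF d s nz ij m2 c(1)] by blast
    then have "y = x" by simp
    then show False using x y by simp
  qed
  have Dz: "Dd1 d ks (complex_of_real y) i = 0" if y: "d/2*(real m - 1) < y" "i \<in> {1..?n}" for y i
  proof (rule ccontr)
    assume nz: "Dd1 d ks (complex_of_real y) i \<noteq> 0"
    obtain t where t: "t < kx ks i + kx ks (i+1)" "complex_of_real (d/2*(real i - 1)) - complex_of_real y = of_nat t"
      using ind_nz[OF nz[unfolded Dd1_def]] by blast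
    have "complex_of_real y = complex_of_real (d/2*(real i - 1) - real t)" by (rule cx0[OF t(2)])
    then have "y = d/2*(real i - 1) - real t" by (simp only: of_real_eq_iff)
    have "kx ks (i+1) \<le> kx ks i" using kx_mono[OF s, of i "i+1"] y by simp
    then have "0 < kx ks i" using t by simp
    then have "i \<le> m"
    proof -
      { assume "m < i" then have "kx ks i \<le> kx ks (m+1)" using kx_mono[OF s, of "m+1" i] by simp
        then have False using c \<open>0 < kx ks i\<close> by simp }
      then show ?thesis by (meson not_le)
    qed
    then have "d/2*(real i - 1) \<le> d/2*(real m - 1)" using d by (intro mult_left_mono) auto
    then show False using \<open>y = _\<close> y by simp
  qed
  have sumP: "(\<Sum>i\<in>{1..?n}. \<Sum>j\<in>{i+1..?n}. P1 d ks (complex_of_real y) i j) = 0"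
    if "d/4*(2*real m - 3) < y" for y
    using Pz[OF that] by (intro dsum_zero) auto
  have A: "d/4*(2*real m - 3) < d / 2 * real m" "d/4*(2*real m - 3) < d / 2 * (real m - 1)"
    "d/2*(real m - 1) < d / 2 * real m" using d by (simp_all add: field_simps)
  have "order (complex_of_real (d / 2 * real m)) (C1b_num d ks) = order (complex_of_real (d / 2 * real m)) (C1b_den d ks)"
    using ordN1[OF s] ordD1 sumP[OF A(1)] Dz[OF A(3)] by simp
  moreover have "order (complex_of_real (d / 2 * (real m - 1))) (C1b_num d ks) < order (complex_of_real (d / 2 * (real m - 1))) (C1b_den d ks)"
  proof -
    have "Dd1 d ks (complex_of_real (d / 2 * (real m - 1))) m = 1"
      unfolding Dd1_def ind_def using c by auto
    moreover have "Dd1 d ks (complex_of_real (d / 2 * (real m - 1))) m \<le> (\<Sum>i\<in>{1..?n}. Dd1 d ks (complex_of_real (d / 2 * (real m - 1))) i)"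
      by (rule member_le_sum) (use m m' in auto)
    ultimately show ?thesis using ordN1[OF s] ordD1 sumP[OF A(2)] by simp
  qed
  ultimately show ?thesis unfolding rat_holo_nonzero_at_def rat_pole_at_def by simp
qed




lemma C1a_phi: assumes "length ks = 2"
  shows "phi1 ks 1 = kx ks 1 + kx ks 2" "phi1 ks 2 = kx ks 2"
proof -
  obtain i j where ij: "1 \<le> i" "i < j" "j \<le> length ks + 1" "i + j = 2 * 1 + 1" "phi1 ks 1 = kx ks i + kx ks j"
    using phi1_ex[of 1 ks] assms by auto
  then have e: "i = 1" "j = 2" by auto
  then show "phi1 ks 1 = kx ks 1 + kx ks 2" using ij(5) by simp
  obtain i j where ij: "1 \<le> i" "i < j" "j \<le> length ks + 1" "i + j = 2 * 2 + 1" "phi1 ks 2 = kx ks i + kx ks j"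
    using phi1_ex[of 2 ks] assms by auto
  then have e: "i = 2" "j = 3" using assms by auto
  moreover have "kx ks 3 = 0" using assms by (simp add: kx_def)
  ultimately show "phi1 ks 2 = kx ks 2" using ij(5) by simp
qed

lemma C1a_orders: assumes "length ks = 2"
  shows "order z (gpoch d (length ks) (phi1 ks)) = order z (C1a_den d ks)"
proof -
  have "order z (gpoch d (length ks) (phi1 ks)) = ind (- z) (kx ks 1 + kx ks 2) + ind (complex_of_real (d/2) - z) (kx ks 2)"
    unfolding order_gpoch assms using C1a_phi[OF assms] by (simp add: numeral_2_eq_2)
  moreover have "order z (C1a_den d ks) = ind (- z) (kx ks 1 + kx ks 2) + ind (complex_of_real (d/2) - z) (kx ks 2)"
    unfolding C1a_den_def by (subst order_mult) (auto simp: lpoch_nz order_lpoch)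
  ultimately show ?thesis by simp
qed

lemma C1a_num_order: "order z (C1a_num d d2 ks) = ind (- (z + complex_of_real (real (kx ks 1) - (d - d2) / 2))) (kx ks 2)"
  unfolding C1a_num_def by (simp add: order_lpoch)

lemma C1a_part:
  assumes "length ks = 2"
  shows "(kx ks 2 > 0 \<longrightarrow> rat_zeros (gpoch d (length ks) (phi1 ks) * C1a_num d d2 ks) (C1a_den d ks)
          \<subseteq> complex_of_real ` {(d - d2) / 2 - real (kx ks 1 + kx ks 2) + 1 .. (d - d2) / 2 - real (kx ks 1)}) \<and>
      (kx ks 2 = 0 \<longrightarrow> rat_zeros (gpoch d (length ks) (phi1 ks) * C1a_num d d2 ks) (C1a_den d ks) = {})"
proof -
  have nz: "gpoch d (length ks) (phi1 ks) * C1a_num d d2 ks \<noteq> 0"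
    using gpoch_nz unfolding C1a_num_def by (simp add: lpoch_nz)
  have Z: "rat_zeros (gpoch d (length ks) (phi1 ks) * C1a_num d d2 ks) (C1a_den d ks) =
     {z. 0 < ind (- (z + complex_of_real (real (kx ks 1) - (d - d2) / 2))) (kx ks 2)}"
    unfolding rat_zeros_def order_mult[OF nz] C1a_orders[OF assms] C1a_num_order by simp
  have sub: "{z. 0 < ind (- (z + complex_of_real (real (kx ks 1) - (d - d2) / 2))) (kx ks 2)}
     \<subseteq> complex_of_real ` {(d - d2) / 2 - real (kx ks 1 + kx ks 2) + 1 .. (d - d2) / 2 - real (kx ks 1)}"
  proof
    fix z assume "z \<in> {z. 0 < ind (- (z + complex_of_real (real (kx ks 1) - (d - d2) / 2))) (kx ks 2)}"
    then obtain t where t: "t < kx ks 2" "- (z + complex_of_real (real (kx ks 1) - (d - d2) / 2)) = of_nat t"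
      using ind_nz by fastforce
    have "z = complex_of_real ((d - d2) / 2 - real (kx ks 1) - real t)"
    proof -
      have "z = - complex_of_real (real (kx ks 1) - (d - d2) / 2) - of_nat t" using t(2) by (simp add: algebra_simps)
      then show ?thesis by simp
    qed
    moreover have "(d - d2) / 2 - real (kx ks 1) - real t \<in> {(d - d2) / 2 - real (kx ks 1 + kx ks 2) + 1 .. (d - d2) / 2 - real (kx ks 1)}"
      using t(1) by auto
    ultimately show "z \<in> complex_of_real ` {(d - d2) / 2 - real (kx ks 1 + kx ks 2) + 1 .. (d - d2) / 2 - real (kx ks 1)}" by blast
  qed
  show ?thesis unfolding Z using sub by auto
qed

lemma C1a_holo:
  assumes d: "d > 0" and L: "length ks = 2" and m: "1 \<le> m" "m \<le> length ks - 1"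
  and p0: "phi1 ks (m+1) = 0" and p1: "phi1 ks m \<noteq> 0"
  shows "rat_holo_nonzero_at (C1a_num d d2 ks) (C1a_den d ks) (complex_of_real (d / 2 * real m)) \<and>
      rat_pole_at (C1a_num d d2 ks) (C1a_den d ks) (complex_of_real (d / 2 * (real m - 1)))"
proof -
  have m1: "m = 1" using m L by simp
  have "phi1 ks 2 = 0" using p0 m1 by (simp add: numeral_2_eq_2)
  then have k2: "kx ks 2 = 0" using C1a_phi[OF L] by simp
  have k1: "0 < kx ks 1" using p1 C1a_phi[OF L] m1 k2 by simp
  have N: "order z (C1a_num d d2 ks) = 0" for z using C1a_num_order k2 by simp
  have D: "order z (C1a_den d ks) = ind (- z) (kx ks 1)" for z
    unfolding C1a_den_def using k2 by (subst order_mult) (auto simp: lpoch_nz order_lpoch)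
  have "ind (- complex_of_real (d / 2)) (kx ks 1) = 0"
  proof (rule ccontr)
    assume "ind (- complex_of_real (d / 2)) (kx ks 1) \<noteq> 0"
    then obtain t where "- complex_of_real (d / 2) = of_nat t" using ind_nz by blast
    then have "complex_of_real (- d/2) = complex_of_real (real t)" by simp
    then have "- d/2 = real t" by (simp only: of_real_eq_iff)
    then show False using d by simp
  qed
  moreover have "ind 0 (kx ks 1) = 1" using k1 unfolding ind_def by auto
  ultimately show ?thesis unfolding rat_holo_nonzero_at_def rat_pole_at_def N D m1 by simp
qed




definition "P2 d ks z i j = ind (1 + complex_of_real (d*(real (i+j) - 1)) - 2*z - of_nat (kx ks i + kx ks (j+1))) (kx ks j - kx ks (j+1))"
definition "SA2 d ks z = (\<Sum>i\<in>{1..length ks}. \<Sum>j\<in>{i+1..length ks}. ind (1 + complex_of_real (d*(real (i+j) - 1)) - 2*z) (kx ks i + kx ks (j+1)))"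
definition "cc ks i = (kx ks i + kx ks (i+1) + 1) div 2"
definition "Ev d ks z i = ind (1/2 + complex_of_real (d/2*(2*real i - 1)) - z) (cc ks i)"
definition "Od d ks z i = ind (complex_of_real (d/2*(2*real i - 1)) - z) ((kx ks i + kx ks (i+1)) div 2)"
definition "Ps d ks z i = ind (1/2 + complex_of_real (d/2*(2*real i - 1)) - z - of_nat (cc ks i)) (kx ks i - cc ks i)"
definition "Qo d ks z i = ind (complex_of_real (d/2*(2*real i - 1)) - z - of_nat (phi2 ks (2*i))) ((kx ks i + kx ks (i+1)) div 2 - phi2 ks (2*i))"
definition "Qs d ks z i = ind (complex_of_real (d*(real i - 1)) - z - of_nat (phi2 ks (2*i-1))) (kx ks i - phi2 ks (2*i-1))"
definition "Ds d ks z i = ind (complex_of_real (d*(real i - 1)) - z) (kx ks i)"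
definition "G2 d ks z a = ind (complex_of_real (d/2*(real a - 1)) - z) (phi2 ks a)"

lemma sum_pairs: "(\<Sum>a\<in>{1..2*n}. f a) = (\<Sum>i\<in>{1..n::nat}. f (2*i-1) + f (2*i))"
proof (induction n)
  case 0 then show ?case by simp
next
  case (Suc n)
  have e: "{1..2 * Suc n} = insert (2*n+2) (insert (2*n+1) {1..2*n})" by auto
  have "(\<Sum>a\<in>{1..2*Suc n}. f a) = f (2*n+2) + (f (2*n+1) + (\<Sum>a\<in>{1..2*n}. f a))"
    unfolding e by simp
  also have "\<dots> = (\<Sum>i\<in>{1..n}. f (2*i-1) + f (2*i)) + (f (2*Suc n - 1) + f (2*Suc n))"
    using Suc by (simp add: add_ac)
  finally show ?case by simp
qed

lemma ordN2: assumes s: "sorted_wrt (\<ge>) ks"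
  shows "order z (C2_num d ks) = SA2 d ks z + (\<Sum>i\<in>{1..length ks}. \<Sum>j\<in>{i+1..length ks}. P2 d ks z i j)
     + (\<Sum>i\<in>{1..length ks}. Ev d ks z i) + (\<Sum>i\<in>{1..length ks}. Ps d ks z i)"
proof -
  let ?A = "\<Prod>i\<in>{1..length ks}. \<Prod>j\<in>{i+1..length ks}.
        lpoch 2 (- 1 - complex_of_real (d * (real (i + j) - 1))) (kx ks i + kx ks j)"
  let ?B = "\<Prod>i\<in>{1..length ks}. lpoch 1 (- 1 / 2 - complex_of_real (d / 2 * (2 * real i - 1))) (kx ks i)"
  have nz: "?A * ?B \<noteq> 0" by (auto simp: prod_zero_iff lpoch_nz)
  have c: "(2::complex) ^ sum_list ks \<noteq> 0" by simp
  have "order z (C2_num d ks) = order z (?A * ?B)" unfolding C2_num_def by (rule order_smult[OF c])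
  also have "\<dots> = order z ?A + order z ?B" by (rule order_mult[OF nz])
  also have "order z ?A = (\<Sum>i\<in>{1..length ks}. \<Sum>j\<in>{i+1..length ks}.
       ind (1 + complex_of_real (d*(real (i+j) - 1)) - 2*z) (kx ks i + kx ks j))"
    by (subst order_dprod) (simp_all add: order_lpoch algebra_simps)
  also have "\<dots> = SA2 d ks z + (\<Sum>i\<in>{1..length ks}. \<Sum>j\<in>{i+1..length ks}. P2 d ks z i j)"
    unfolding SA2_def sum.distrib[symmetric]
  proof (intro sum.cong refl)
    fix i j assume "i \<in> {1..length ks}" "j \<in> {i+1..length ks}"
    then have "kx ks (j+1) \<le> kx ks j" using kx_mono[OF s, of j "j+1"] by auto
    then have le: "kx ks i + kx ks (j+1) \<le> kx ks i + kx ks j" by simp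
    show "ind (1 + complex_of_real (d*(real (i+j) - 1)) - 2*z) (kx ks i + kx ks j) =
       ind (1 + complex_of_real (d*(real (i+j) - 1)) - 2*z) (kx ks i + kx ks (j+1)) + P2 d ks z i j"
      unfolding P2_def using ind_split'[OF le] le by simp
  qed
  also have "order z ?B = (\<Sum>i\<in>{1..length ks}. Ev d ks z i + Ps d ks z i)"
  proof -
    have "order z ?B = (\<Sum>i\<in>{1..length ks}. ind (1/2 + complex_of_real (d/2*(2*real i - 1)) - z) (kx ks i))"
      by (subst order_prod) (auto simp: lpoch_nz order_lpoch algebra_simps)
    also have "\<dots> = (\<Sum>i\<in>{1..length ks}. Ev d ks z i + Ps d ks z i)"
    proof (intro sum.cong refl)
      fix i assume "i \<in> {1..length ks}"
      then have "kx ks (i+1) \<le> kx ks i" using kx_mono[OF s, of i "i+1"] by auto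
      then have le: "cc ks i \<le> kx ks i" unfolding cc_def by simp
      show "ind (1/2 + complex_of_real (d/2*(2*real i - 1)) - z) (kx ks i) = Ev d ks z i + Ps d ks z i"
        unfolding Ev_def Ps_def using ind_split'[OF le] .
    qed
    finally show ?thesis .
  qed
  finally show ?thesis by (simp add: sum.distrib)
qed

lemma ordD2: assumes s: "sorted_wrt (\<ge>) ks"
  shows "order z (C2_den d ks) = SA2 d ks z + (\<Sum>i\<in>{1..length ks}. Ev d ks z i + Od d ks z i)
     + (\<Sum>i\<in>{1..length ks}. Ds d ks z i)"
proof -
  let ?A = "\<Prod>i\<in>{1..length ks + 1}. \<Prod>j\<in>{i+1..length ks + 1}.
        lpoch 2 (- 1 - complex_of_real (d * (real (i + j) - 2))) (kx ks i + kx ks j)"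
  let ?B = "\<Prod>i\<in>{1..length ks}. lpoch 1 (- complex_of_real (d * (real i - 1))) (kx ks i)"
  let ?X = "\<lambda>i j. ind (1 + complex_of_real (d*(real (i+j) - 2)) - 2*z) (kx ks i + kx ks j)"
  have nz: "?A * ?B \<noteq> 0" by (auto simp: prod_zero_iff lpoch_nz)
  have "order z (C2_den d ks) = order z ?A + order z ?B"
    unfolding C2_den_def by (rule order_mult[OF nz])
  also have "order z ?A = (\<Sum>i\<in>{1..length ks + 1}. \<Sum>j\<in>{i+1..length ks + 1}. ?X i j)"
    by (subst order_dprod) (simp_all add: order_lpoch algebra_simps)
  also have "\<dots> = (\<Sum>i\<in>{1..length ks}. \<Sum>j\<in>{Suc i..Suc (length ks)}. ?X i j)"
    by simp
  also have "\<dots> = (\<Sum>i\<in>{1..length ks}. (Ev d ks z i + Od d ks z i) + (\<Sum>j\<in>{Suc i..length ks}. ?X i (Suc j)))"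
  proof (intro sum.cong refl)
    fix i assume i: "i \<in> {1..length ks}"
    have "(\<Sum>j\<in>{Suc i..Suc (length ks)}. ?X i j) = ?X i (Suc i) + (\<Sum>j\<in>{Suc (Suc i)..Suc (length ks)}. ?X i j)"
      using i by (intro sum.atLeast_Suc_atMost) auto
    also have "(\<Sum>j\<in>{Suc (Suc i)..Suc (length ks)}. ?X i j) = (\<Sum>j\<in>{Suc i..length ks}. ?X i (Suc j))"
      by (rule sum.shift_bounds_cl_Suc_ivl)
    also have "?X i (Suc i) = Ev d ks z i + Od d ks z i"
    proof -
      have e1: "(1 + complex_of_real (d*(real (i + Suc i) - 2)) - 2*z) / 2 = 1/2 + complex_of_real (d/2*(2*real i - 1)) - z"
        by (simp add: field_simps)
      have e2: "(1 + complex_of_real (d*(real (i + Suc i) - 2)) - 2*z - 1) / 2 = complex_of_real (d/2*(2*real i - 1)) - z"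
        by (simp add: field_simps)
      have e3: "(kx ks i + kx ks (Suc i) + 1) div 2 = cc ks i" unfolding cc_def by simp
      show ?thesis unfolding Ev_def Od_def ind_evenodd[of _ "kx ks i + kx ks (Suc i)"]
        by (simp only: e1 e2 e3) (simp only: Suc_eq_plus1)
    qed
    finally show "(\<Sum>j\<in>{Suc i..Suc (length ks)}. ?X i j) = (Ev d ks z i + Od d ks z i) + (\<Sum>j\<in>{Suc i..length ks}. ?X i (Suc j))" .
  qed
  also have "\<dots> = (\<Sum>i\<in>{1..length ks}. Ev d ks z i + Od d ks z i) + SA2 d ks z"
  proof -
    have "(\<Sum>i\<in>{1..length ks}. \<Sum>j\<in>{Suc i..length ks}. ?X i (Suc j)) = SA2 d ks z"
      unfolding SA2_def
    proof (intro sum.cong refl)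
      fix i j
      have e: "d*(real (i + Suc j) - 2) = d*(real (i+j) - 1)" by (simp add: field_simps)
      show "?X i (Suc j) = ind (1 + complex_of_real (d*(real (i+j) - 1)) - 2*z) (kx ks i + kx ks (j+1))"
        by (simp only: e) (simp only: Suc_eq_plus1)
    qed simp
    then show ?thesis by (simp add: sum.distrib)
  qed
  also have "order z ?B = (\<Sum>i\<in>{1..length ks}. Ds d ks z i)"
    unfolding Ds_def by (subst order_prod) (auto simp: lpoch_nz order_lpoch algebra_simps)
  finally show ?thesis by simp
qed

lemma Od_split: assumes "1 \<le> i" "i \<le> length ks" shows "Od d ks z i = G2 d ks z (2*i) + Qo d ks z i"
proof -
  have le: "phi2 ks (2*i) \<le> (kx ks i + kx ks (i+1)) div 2" by (rule phi2_le) (use assms in auto)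
  have e: "d/2*(real (2*i) - 1) = d/2*(2*real i - 1)" by simp
  show ?thesis unfolding Od_def G2_def Qo_def ind_split'[OF le] by (simp only: e)
qed

lemma Ds_split: assumes "1 \<le> i" "i \<le> length ks" shows "Ds d ks z i = G2 d ks z (2*i-1) + Qs d ks z i"
proof -
  have "phi2 ks (2*i-1) \<le> (kx ks i + kx ks i) div 2" by (rule phi2_le) (use assms in auto)
  then have le: "phi2 ks (2*i-1) \<le> kx ks i" by simp
  have e: "d/2*(real (2*i-1) - 1) = d*(real i - 1)" using assms by (simp add: of_nat_diff field_simps)
  show ?thesis unfolding Ds_def G2_def Qs_def ind_split'[OF le] by (simp only: e)
qed

lemma main_id2: assumes s: "sorted_wrt (\<ge>) ks"
  shows "order z (gpoch d (2 * length ks) (phi2 ks) * C2_num d ks) + (\<Sum>i\<in>{1..length ks}. Qo d ks z i) + (\<Sum>i\<in>{1..length ks}. Qs d ks z i)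
       = order z (C2_den d ks) + (\<Sum>i\<in>{1..length ks}. \<Sum>j\<in>{i+1..length ks}. P2 d ks z i j) + (\<Sum>i\<in>{1..length ks}. Ps d ks z i)"
proof -
  have nz: "gpoch d (2 * length ks) (phi2 ks) * C2_num d ks \<noteq> 0"
    using gpoch_nz unfolding C2_num_def by (auto simp: prod_zero_iff lpoch_nz)
  have g: "order z (gpoch d (2 * length ks) (phi2 ks)) = (\<Sum>i\<in>{1..length ks}. G2 d ks z (2*i-1) + G2 d ks z (2*i))"
    unfolding order_gpoch G2_def by (rule sum_pairs)
  have o: "(\<Sum>i\<in>{1..length ks}. Od d ks z i) = (\<Sum>i\<in>{1..length ks}. G2 d ks z (2*i)) + (\<Sum>i\<in>{1..length ks}. Qo d ks z i)"
    by (simp add: Od_split sum.distrib[symmetric])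
  have q: "(\<Sum>i\<in>{1..length ks}. Ds d ks z i) = (\<Sum>i\<in>{1..length ks}. G2 d ks z (2*i-1)) + (\<Sum>i\<in>{1..length ks}. Qs d ks z i)"
    by (simp add: Ds_split sum.distrib[symmetric])
  show ?thesis using order_mult[OF nz] g o q ordN2[OF s] ordD2[OF s] by (simp add: sum.distrib)
qed




lemma P2_nz: assumes "P2 d ks z i j \<noteq> 0"
  shows "\<exists>t. t < kx ks j - kx ks (j+1) \<and> z = complex_of_real ((1 + d*(real (i+j) - 1) - real (kx ks i + kx ks (j+1)) - real t) / 2)"
proof -
  obtain t where t: "t < kx ks j - kx ks (j+1)"
    "1 + complex_of_real (d*(real (i+j) - 1)) - 2*z - of_nat (kx ks i + kx ks (j+1)) = of_nat t"
    using ind_nz[OF assms[unfolded P2_def]] by blast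
  have "2*z = 1 + complex_of_real (d*(real (i+j) - 1)) - of_nat (kx ks i + kx ks (j+1)) - of_nat t"
    using t(2) by (simp add: algebra_simps)
  then have "z = (1 + complex_of_real (d*(real (i+j) - 1)) - of_nat (kx ks i + kx ks (j+1)) - of_nat t) / 2"
    by (simp add: field_simps)
  then have "z = complex_of_real ((1 + d*(real (i+j) - 1) - real (kx ks i + kx ks (j+1)) - real t) / 2)"
    by simp
  then show ?thesis using t(1) by blast
qed

lemma Ps_nz: assumes "Ps d ks z i \<noteq> 0"
  shows "\<exists>t. t < kx ks i - cc ks i \<and> z = complex_of_real (1/2 + d/2*(2*real i - 1) - real (cc ks i) - real t)"
proof -
  obtain t where t: "t < kx ks i - cc ks i"
    "1/2 + complex_of_real (d/2*(2*real i - 1)) - z - of_nat (cc ks i) = of_nat t"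
    using ind_nz[OF assms[unfolded Ps_def]] by blast
  have "z = 1/2 + complex_of_real (d/2*(2*real i - 1)) - of_nat (cc ks i) - of_nat t"
    using t(2) by (simp add: algebra_simps)
  then have "z = complex_of_real (1/2 + d/2*(2*real i - 1) - real (cc ks i) - real t)" by simp
  then show ?thesis using t(1) by blast
qed

lemma ind_nat1: "a < L \<Longrightarrow> ind (of_nat a) L = 1" unfolding ind_def by auto

lemma C2_zero_gt: assumes "sorted_wrt (\<ge>) ks"
  and "z \<in> rat_zeros (gpoch d (2 * length ks) (phi2 ks) * C2_num d ks) (C2_den d ks)"
  shows "(\<Sum>i\<in>{1..length ks}. Qo d ks z i) + (\<Sum>i\<in>{1..length ks}. Qs d ks z i) <
     (\<Sum>i\<in>{1..length ks}. \<Sum>j\<in>{i+1..length ks}. P2 d ks z i j) + (\<Sum>i\<in>{1..length ks}. Ps d ks z i)"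
  using main_id2[OF assms(1), of z d] assms(2) unfolding rat_zeros_def by simp

lemma C2_key:
  assumes d: "d > 0" and s: "sorted_wrt (\<ge>) ks"
  and bad: "\<And>i j. i \<in> {1..length ks} \<Longrightarrow> j \<in> {i+1..length ks} \<Longrightarrow> P2 d ks z i j \<noteq> 0 \<Longrightarrow>
      j = j0 \<and> (kx ks i + kx ks (j0+1)) div 2 \<le> v0 \<and> v0 < kx ks j0 \<and>
      z = complex_of_real (d/2*(real (i+j0) - 1) - real v0)"
  and psz: "\<And>i. i \<in> {1..length ks} \<Longrightarrow> Ps d ks z i = 0"
  shows "z \<notin> rat_zeros (gpoch d (2 * length ks) (phi2 ks) * C2_num d ks) (C2_den d ks)"
proof
  let ?n = "length ks"
  assume zZ: "z \<in> rat_zeros (gpoch d (2 * length ks) (phi2 ks) * C2_num d ks) (C2_den d ks)"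
  have ps0: "(\<Sum>i\<in>{1..?n}. Ps d ks z i) = 0" using psz by simp
  have gt: "(\<Sum>i\<in>{1..?n}. Qo d ks z i) + (\<Sum>i\<in>{1..?n}. Qs d ks z i) <
     (\<Sum>i\<in>{1..?n}. \<Sum>j\<in>{i+1..?n}. P2 d ks z i j)" using C2_zero_gt[OF s zZ] ps0 by simp
  then have "(\<Sum>i\<in>{1..?n}. \<Sum>j\<in>{i+1..?n}. P2 d ks z i j) \<noteq> 0" by linarith
  then obtain i0 j0' where ij0: "i0 \<in> {1..?n}" "j0' \<in> {i0+1..?n}" "P2 d ks z i0 j0' \<noteq> 0"
    using dsum_pos by blast
  have b0: "j0' = j0" "(kx ks i0 + kx ks (j0+1)) div 2 \<le> v0" "v0 < kx ks j0"
    "z = complex_of_real (d/2*(real (i0+j0) - 1) - real v0)" using bad[OF ij0] by auto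
  have "(\<Sum>i\<in>{1..?n}. \<Sum>j\<in>{i+1..?n}. P2 d ks z i j) \<le> P2 d ks z i0 j0"
  proof (rule dsum_single)
    fix i j assume ij: "i \<in> {1..?n}" "j \<in> {i+1..?n}" "P2 d ks z i j \<noteq> 0"
    have b: "j = j0" "z = complex_of_real (d/2*(real (i+j0) - 1) - real v0)" using bad[OF ij] by auto
    have "complex_of_real (d/2*(real (i+j0) - 1) - real v0) = complex_of_real (d/2*(real (i0+j0) - 1) - real v0)"
      using b(2) b0(4) by metis
    then have "d/2*(real (i+j0) - 1) - real v0 = d/2*(real (i0+j0) - 1) - real v0" by (simp only: of_real_eq_iff)
    then have "i = i0" using d by auto
    then show "i = i0 \<and> j = j0" using b by simp
  qed
  also have "\<dots> \<le> 1" unfolding P2_def by (rule ind_le1)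
  finally have P1: "(\<Sum>i\<in>{1..?n}. \<Sum>j\<in>{i+1..?n}. P2 d ks z i j) \<le> 1" .
  have ij0': "1 \<le> i0" "i0 < j0" "j0 \<le> ?n" using ij0 b0 by auto
  have kc: "kx ks j0 \<le> kx ks c" if "1 \<le> c" "c \<le> j0" for c using kx_mono[OF s, of c j0] that by simp
  have "1 \<le> (\<Sum>i\<in>{1..?n}. Qo d ks z i) + (\<Sum>i\<in>{1..?n}. Qs d ks z i)"
  proof (cases "even (i0 + j0)")
    case True
    then obtain c where c: "i0 + j0 = 2 * c" by blast
    have cr: "1 \<le> c" "c + 1 \<le> j0" "c \<le> ?n" using c ij0' by auto
    have ph: "phi2 ks (2*c) \<le> (kx ks i0 + kx ks (j0+1)) div 2"
      by (rule phi2_le) (use c ij0' in auto)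
    have "kx ks j0 \<le> (kx ks c + kx ks (c+1)) div 2" using kc[of c] kc[of "c+1"] cr by simp
    then have lt: "v0 - phi2 ks (2*c) < (kx ks c + kx ks (c+1)) div 2 - phi2 ks (2*c)" using b0 ph by linarith
    have arg: "complex_of_real (d/2*(2*real c - 1)) - z - of_nat (phi2 ks (2*c)) = of_nat (v0 - phi2 ks (2*c))"
    proof -
      have "real (i0 + j0) = 2 * real c" using c by simp
      then show ?thesis using b0(4) b0(2) ph by (simp add: of_nat_diff)
    qed
    have "Qo d ks z c = 1" unfolding Qo_def arg using ind_nat1[OF lt] .
    moreover have "Qo d ks z c \<le> (\<Sum>i\<in>{1..?n}. Qo d ks z i)" by (rule member_le_sum) (use cr in auto)
    ultimately show ?thesis by linarith
  next
    case False
    then have "even (i0 + j0 + 1)" by simp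
    then obtain c where c: "i0 + j0 + 1 = 2 * c" by blast
    have cr: "1 \<le> c" "c \<le> j0" "c \<le> ?n" using c ij0' by auto
    have ph: "phi2 ks (2*c-1) \<le> (kx ks i0 + kx ks (j0+1)) div 2"
      by (rule phi2_le) (use c ij0' in auto)
    have lt: "v0 - phi2 ks (2*c-1) < kx ks c - phi2 ks (2*c-1)" using b0 ph kc[of c] cr by linarith
    have arg: "complex_of_real (d*(real c - 1)) - z - of_nat (phi2 ks (2*c-1)) = of_nat (v0 - phi2 ks (2*c-1))"
    proof -
      have r: "real (i0 + j0) = 2 * real c - 1" using c by (simp add: algebra_simps)
      have "d/2*(real (i0+j0) - 1) = d/2*((2 * real c - 1) - 1)" by (simp only: r)
      also have "\<dots> = d*(real c - 1)" by (simp add: field_simps)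
      finally have eq: "d/2*(real (i0+j0) - 1) = d*(real c - 1)" .
      have z': "z = complex_of_real (d*(real c - 1) - real v0)" using b0(4) unfolding eq .
      show ?thesis using z' b0(2) ph by (simp add: of_nat_diff)
    qed
    have "Qs d ks z c = 1" unfolding Qs_def arg using ind_nat1[OF lt] .
    moreover have "Qs d ks z c \<le> (\<Sum>i\<in>{1..?n}. Qs d ks z i)" by (rule member_le_sum) (use cr in auto)
    ultimately show ?thesis by linarith
  qed
  then show False using gt P1 by linarith
qed




lemma C2_key2:
  assumes d: "d > 0" and s: "sorted_wrt (\<ge>) ks"
  and bad: "\<And>i j. i \<in> {1..length ks} \<Longrightarrow> j \<in> {i+1..length ks} \<Longrightarrow> P2 d ks z i j \<noteq> 0 \<Longrightarrow>
      J j \<and> (kx ks i + kx ks (j+1)) div 2 \<le> vv \<and> vv < kx ks j \<and>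
      z = complex_of_real (d/2*(real (i+j) - 1) - real vv)"
  and uniq: "\<And>j j'. J j \<Longrightarrow> J j' \<Longrightarrow> j = j'"
  and psz: "\<And>i. i \<in> {1..length ks} \<Longrightarrow> Ps d ks z i = 0"
  shows "z \<notin> rat_zeros (gpoch d (2 * length ks) (phi2 ks) * C2_num d ks) (C2_den d ks)"
proof (cases "\<exists>i j. i \<in> {1..length ks} \<and> j \<in> {i+1..length ks} \<and> P2 d ks z i j \<noteq> 0")
  case True
  then obtain i1 j1 where ij1: "i1 \<in> {1..length ks}" "j1 \<in> {i1+1..length ks}" "P2 d ks z i1 j1 \<noteq> 0" by blast
  have J1: "J j1" using bad[OF ij1] by blast
  show ?thesis
  proof (rule C2_key[OF d s _ psz])
    fix i j assume ij: "i \<in> {1..length ks}" "j \<in> {i+1..length ks}" "P2 d ks z i j \<noteq> 0"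
    have "j = j1" using uniq[OF _ J1] bad[OF ij] by blast
    then show "j = j1 \<and> (kx ks i + kx ks (j1+1)) div 2 \<le> vv \<and> vv < kx ks j1 \<and>
      z = complex_of_real (d/2*(real (i+j1) - 1) - real vv)" using bad[OF ij] by blast
  qed
next
  case False
  show ?thesis
    by (rule C2_key[OF d s _ psz, of 1 0]) (use False in blast)
qed

lemma top_uniq: assumes s: "sorted_wrt (\<ge>) ks" and "1 \<le> j" "1 \<le> j'"
  "kx ks j = K" "kx ks (j+1) < K" "kx ks j' = K" "kx ks (j'+1) < K" shows "j = j'"
proof (rule ccontr)
  assume "j \<noteq> j'"
  then consider "j < j'" | "j' < j" by linarith
  then show False
  proof cases
    case 1 then have "kx ks j' \<le> kx ks (j+1)" using kx_mono[OF s, of "j+1" j'] by simp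
    then show False using assms by simp
  next
    case 2 then have "kx ks j \<le> kx ks (j'+1)" using kx_mono[OF s, of "j'+1" j] by simp
    then show False using assms by simp
  qed
qed

lemma cc_ge: "kx ks i + kx ks (i+1) \<le> 2 * cc ks i" unfolding cc_def by simp

lemma C2_LB:
  assumes d: "d > 0" and s: "sorted_wrt (\<ge>) ks" and m: "1 \<le> m1" "m1 \<le> length ks"
  and km: "kx ks 1 \<le> kx ks m1 + 1"
  and zZ: "z \<in> rat_zeros (gpoch d (2 * length ks) (phi2 ks) * C2_num d ks) (C2_den d ks)"
  shows "\<exists>x. z = complex_of_real x \<and> d / 2 * real m1 - real (kx ks 1) + 3 / 2 \<le> x"
proof (rule ccontr)
  assume H: "\<not> ?thesis"
  let ?K = "kx ks 1"
  have k1: "kx ks i \<le> ?K" if "1 \<le> i" for i using kx_mono[OF s, of 1 i] that by simp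
  have km1: "?K - 1 \<le> kx ks i" if "1 \<le> i" "i \<le> m1" for i using kx_mono[OF s, of i m1] that km by simp
  have dm: "d * real m1 \<le> d * real p" if "m1 \<le> p" for p using d that by simp
  have "z \<notin> rat_zeros (gpoch d (2 * length ks) (phi2 ks) * C2_num d ks) (C2_den d ks)"
  proof (rule C2_key2[OF d s, where J = "\<lambda>j. kx ks j = ?K \<and> kx ks (j+1) < ?K \<and> 1 \<le> j" and vv = "?K - 1"])
    fix i j assume ij: "i \<in> {1..length ks}" "j \<in> {i+1..length ks}" "P2 d ks z i j \<noteq> 0"
    obtain t where t: "t < kx ks j - kx ks (j+1)"
      and z: "z = complex_of_real ((1 + d*(real (i+j) - 1) - real (kx ks i + kx ks (j+1)) - real t) / 2)"
      using P2_nz[OF ij(3)] by blast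
    have ki: "kx ks j \<le> kx ks i" using kx_mono[OF s, of i j] ij by simp
    have kj: "kx ks j \<le> ?K" "kx ks i \<le> ?K" using k1 ij by auto
    have top: "kx ks j = ?K \<and> t = kx ks j - kx ks (j+1) - 1"
    proof (rule ccontr)
      assume nt: "\<not> (kx ks j = ?K \<and> t = kx ks j - kx ks (j+1) - 1)"
      have jm: "m1 \<le> j"
      proof (rule ccontr)
        assume "\<not> m1 \<le> j"
        then have "?K - 1 \<le> kx ks (j+1)" using km1[of "j+1"] ij by auto
        then show False using nt t kj by linarith
      qed
      have "kx ks i + kx ks (j+1) + t + 2 \<le> 2 * ?K" using nt t kj by linarith
      moreover have "d * real m1 \<le> d * (real (i+j) - 1)" using dm[of "i+j-1"] jm ij by (simp add: of_nat_diff)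
      ultimately have "d / 2 * real m1 - real ?K + 3 / 2 \<le> (1 + d*(real (i+j) - 1) - real (kx ks i + kx ks (j+1)) - real t) / 2"
        by (simp add: field_simps)
      then show False using H z by blast
    qed
    have kiK: "kx ks i = ?K" using ki kj top by simp
    have e: "(1 + d*(real (i+j) - 1) - real (kx ks i + kx ks (j+1)) - real t) / 2 = d/2*(real (i+j) - 1) - real (?K - 1)"
      using top kiK t by (simp add: of_nat_diff field_simps)
    have "z = complex_of_real (d/2*(real (i+j) - 1) - real (?K - 1))" using z unfolding e .
    moreover have "(kx ks i + kx ks (j+1)) div 2 \<le> ?K - 1" "?K - 1 < kx ks j" "kx ks (j+1) < ?K" using kiK top t by auto
    ultimately show "(kx ks j = ?K \<and> kx ks (j+1) < ?K \<and> 1 \<le> j) \<and> (kx ks i + kx ks (j+1)) div 2 \<le> ?K - 1 \<and> ?K - 1 < kx ks j \<and>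
      z = complex_of_real (d/2*(real (i+j) - 1) - real (?K - 1))" using top ij by auto
  next
    fix j j' assume "kx ks j = ?K \<and> kx ks (j+1) < ?K \<and> 1 \<le> j" "kx ks j' = ?K \<and> kx ks (j'+1) < ?K \<and> 1 \<le> j'"
    then show "j = j'" using top_uniq[OF s] by blast
  next
    fix i assume i: "i \<in> {1..length ks}"
    show "Ps d ks z i = 0"
    proof (rule ccontr)
      assume nz: "Ps d ks z i \<noteq> 0"
      obtain t where t: "t < kx ks i - cc ks i" and z: "z = complex_of_real (1/2 + d/2*(2*real i - 1) - real (cc ks i) - real t)"
        using Ps_nz[OF nz] by blast
      have c2: "kx ks i + kx ks (i+1) \<le> 2 * cc ks i" by (rule cc_ge)
      have im: "m1 \<le> i"
      proof (rule ccontr)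
        assume "\<not> m1 \<le> i"
        then have "?K - 1 \<le> kx ks (i+1)" using km1[of "i+1"] i by auto
        moreover have "cc ks i < kx ks i" using t by simp
        moreover have "kx ks i \<le> ?K" using k1 i by simp
        ultimately have "?K \<le> kx ks (i+1) + 1" by linarith
        then show False using \<open>cc ks i < kx ks i\<close> \<open>kx ks i \<le> ?K\<close> c2 by linarith
      qed
      have "d * real m1 \<le> d * (2 * real i - 1)" using dm[of "2*i-1"] im m by (simp add: of_nat_diff)
      moreover have "real (cc ks i) + real t + 1 \<le> real ?K"
      proof -
        have a: "kx ks i \<le> ?K" using k1 i by simp
        have "cc ks i + t + 1 \<le> ?K" using t a by linarith
        then have "real (cc ks i + t + 1) \<le> real ?K" by (simp only: of_nat_le_iff)
        then show ?thesis by simp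
      qed
      ultimately have "d / 2 * real m1 - real ?K + 3 / 2 \<le> 1/2 + d/2*(2*real i - 1) - real (cc ks i) - real t"
        by (simp add: field_simps)
      then show False using H z by blast
    qed
  qed
  then show False using zZ by blast
qed




lemma ceil_half: "real_of_int \<lceil>real n / 2\<rceil> = real ((n + 1) div 2)"
proof (cases "even n")
  case True then obtain b where "n = 2*b" by blast
  then show ?thesis using ceil_even[of b] by simp
next
  case False then obtain b where b: "n = 2*b+1" using oddE by blast
  then have "(n+1) div 2 = b + 1" by simp
  then show ?thesis using ceil_odd[of b] b by simp
qed

lemma C2_empty:
  assumes d: "d > 0" and s: "sorted_wrt (\<ge>) ks" and k1: "kx ks 1 \<le> 1"
  shows "rat_zeros (gpoch d (2 * length ks) (phi2 ks) * C2_num d ks) (C2_den d ks) = {}"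
proof -
  have kle: "kx ks i \<le> 1" if "1 \<le> i" for i using kx_mono[OF s, of 1 i] that k1 by simp
  { fix z
    have "z \<notin> rat_zeros (gpoch d (2 * length ks) (phi2 ks) * C2_num d ks) (C2_den d ks)"
    proof (rule C2_key2[OF d s, where J = "\<lambda>j. kx ks j = 1 \<and> kx ks (j+1) < 1 \<and> 1 \<le> j" and vv = 0])
      fix i j assume ij: "i \<in> {1..length ks}" "j \<in> {i+1..length ks}" "P2 d ks z i j \<noteq> 0"
      obtain t where t: "t < kx ks j - kx ks (j+1)"
        and z: "z = complex_of_real ((1 + d*(real (i+j) - 1) - real (kx ks i + kx ks (j+1)) - real t) / 2)"
        using P2_nz[OF ij(3)] by blast
      have ki: "kx ks j \<le> kx ks i" using kx_mono[OF s, of i j] ij by simp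
      have v: "kx ks j = 1" "kx ks (j+1) = 0" "t = 0" "kx ks i = 1" using t kle[of j] kle[of i] ki ij by auto
      have e: "(1 + d*(real (i+j) - 1) - real (kx ks i + kx ks (j+1)) - real t) / 2 = d/2*(real (i+j) - 1) - real (0::nat)"
        using v by (simp add: field_simps)
      show "(kx ks j = 1 \<and> kx ks (j+1) < 1 \<and> 1 \<le> j) \<and> (kx ks i + kx ks (j+1)) div 2 \<le> 0 \<and> 0 < kx ks j \<and>
        z = complex_of_real (d/2*(real (i+j) - 1) - real (0::nat))" using z[unfolded e] v ij by auto
    next
      fix j j' assume "kx ks j = 1 \<and> kx ks (j+1) < 1 \<and> 1 \<le> j" "kx ks j' = 1 \<and> kx ks (j'+1) < 1 \<and> 1 \<le> j'"
      then show "j = j'" using top_uniq[OF s] by blast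
    next
      fix i assume i: "i \<in> {1..length ks}"
      show "Ps d ks z i = 0"
      proof (rule ccontr)
        assume nz: "Ps d ks z i \<noteq> 0"
        obtain t where t: "t < kx ks i - cc ks i" using Ps_nz[OF nz] by blast
        have "kx ks i + kx ks (i+1) \<le> 2 * cc ks i" by (rule cc_ge)
        moreover have "kx ks i \<le> 1" using kle i by simp
        ultimately show False using t unfolding cc_def by linarith
      qed
    qed }
  then show ?thesis by blast
qed

lemma C2_UBa:
  assumes d: "d > 0" and s: "sorted_wrt (\<ge>) ks" and m: "1 \<le> m2" "m2 < m3" "m3 \<le> length ks"
  and ones: "\<forall>a. m2 + 1 \<le> a \<and> a \<le> m3 \<longrightarrow> kx ks a = 1" and z0: "kx ks (m3 + 1) = 0"
  and zZ: "z \<in> rat_zeros (gpoch d (2 * length ks) (phi2 ks) * C2_num d ks) (C2_den d ks)"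
  shows "\<exists>x. z = complex_of_real x \<and> x \<le> d / 2 * (real (m2 + m3) - 1) - real (kx ks m2) / 2 + 1 / 2"
proof (rule ccontr)
  assume H: "\<not> ?thesis"
  have one: "kx ks a = 1" if "m2 + 1 \<le> a" "a \<le> m3" for a using ones that by blast
  have big0: "kx ks a = 0" if "m3 + 1 \<le> a" for a using kx_mono[OF s, of "m3+1" a] that z0 by simp
  have km2: "kx ks m2 \<le> kx ks i" if "1 \<le> i" "i \<le> m2" for i using kx_mono[OF s, of i m2] that by simp
  have "z \<notin> rat_zeros (gpoch d (2 * length ks) (phi2 ks) * C2_num d ks) (C2_den d ks)"
  proof (rule C2_key2[OF d s, where J = "\<lambda>j. j = m3" and vv = 0])
    fix i j assume ij: "i \<in> {1..length ks}" "j \<in> {i+1..length ks}" "P2 d ks z i j \<noteq> 0"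
    obtain t where t: "t < kx ks j - kx ks (j+1)"
      and z: "z = complex_of_real ((1 + d*(real (i+j) - 1) - real (kx ks i + kx ks (j+1)) - real t) / 2)"
      using P2_nz[OF ij(3)] by blast
    have jm3: "j \<le> m3"
    proof (rule ccontr)
      assume "\<not> j \<le> m3" then have "kx ks j = 0" using big0 by simp
      then show False using t by simp
    qed
    have jcase: "j \<le> m2 \<or> j = m3"
    proof (rule ccontr)
      assume "\<not> (j \<le> m2 \<or> j = m3)"
      then have "kx ks j = 1" "kx ks (j+1) = 1" using one jm3 by auto
      then show False using t by simp
    qed
    show "j = m3 \<and> (kx ks i + kx ks (j+1)) div 2 \<le> 0 \<and> 0 < kx ks j \<and>
        z = complex_of_real (d/2*(real (i+j) - 1) - real (0::nat))"
    proof (cases "i \<le> m2")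
      case True
      have ij2: "i + j \<le> m2 + m3" using jcase True ij m by auto
      have "d * (real (i+j) - 1) \<le> d * (real (m2 + m3) - 1)" using d ij2 by simp
      moreover have "real (kx ks m2) \<le> real (kx ks i)" using km2[of i] True ij by simp
      ultimately have "(1 + d*(real (i+j) - 1) - real (kx ks i + kx ks (j+1)) - real t) / 2
          \<le> d / 2 * (real (m2 + m3) - 1) - real (kx ks m2) / 2 + 1 / 2" by (simp add: field_simps)
      then show ?thesis using H z by blast
    next
      case False
      then have jj: "j = m3" using jcase ij by auto
      have v: "kx ks i = 1" "kx ks j = 1" "kx ks (j+1) = 0" using one[of i] one[of j] False ij jj z0 m by auto
      then have "t = 0" using t by simp
      have e: "(1 + d*(real (i+j) - 1) - real (kx ks i + kx ks (j+1)) - real t) / 2 = d/2*(real (i+j) - 1) - real (0::nat)"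
        using v \<open>t = 0\<close> by (simp add: field_simps)
      show ?thesis using z[unfolded e] v jj by simp
    qed
  next
    fix j j' assume "j = m3" "j' = m3" then show "j = j'" by simp
  next
    fix i assume i: "i \<in> {1..length ks}"
    show "Ps d ks z i = 0"
    proof (rule ccontr)
      assume nz: "Ps d ks z i \<noteq> 0"
      obtain t where t: "t < kx ks i - cc ks i" and z: "z = complex_of_real (1/2 + d/2*(2*real i - 1) - real (cc ks i) - real t)"
        using Ps_nz[OF nz] by blast
      have c2: "kx ks i + kx ks (i+1) \<le> 2 * cc ks i" by (rule cc_ge)
      have "2 \<le> kx ks i" using t c2 by linarith
      then have im: "i \<le> m2"
      proof -
        { assume "m2 < i"
          then have "kx ks i \<le> 1" using one[of i] big0[of i] by (cases "i \<le> m3") auto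
          then have False using \<open>2 \<le> kx ks i\<close> by simp }
        then show ?thesis by (meson not_le)
      qed
      have "d * (2 * real i - 1) \<le> d * (real (m2 + m3) - 1)" using d im m by simp
      moreover have "real (kx ks m2) \<le> 2 * real (cc ks i)"
      proof -
        have "kx ks m2 \<le> 2 * cc ks i" using km2[of i] im i c2 by simp
        then show ?thesis by (metis of_nat_le_iff of_nat_mult of_nat_numeral)
      qed
      ultimately have "1/2 + d/2*(2*real i - 1) - real (cc ks i) - real t \<le> d / 2 * (real (m2 + m3) - 1) - real (kx ks m2) / 2 + 1 / 2"
        by (simp add: field_simps)
      then show False using H z by blast
    qed
  qed
  then show False using zZ by blast
qed

lemma C2_UBb:
  assumes d: "d > 0" and s: "sorted_wrt (\<ge>) ks" and m: "1 \<le> M" "M \<le> length ks"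
  and z0: "kx ks (M + 1) = 0"
  and zZ: "z \<in> rat_zeros (gpoch d (2 * length ks) (phi2 ks) * C2_num d ks) (C2_den d ks)"
  shows "\<exists>x. z = complex_of_real x \<and> x \<le> d / 2 * (2 * real M - 1) - real_of_int \<lceil>real (kx ks M) / 2\<rceil> + 1 / 2"
proof (rule ccontr)
  assume H0: "\<not> ?thesis"
  define e where "e = (kx ks M + 1) div 2"
  have H: "\<not> (\<exists>x. z = complex_of_real x \<and> x \<le> d / 2 * (2 * real M - 1) - real e + 1 / 2)"
    using H0 unfolding e_def ceil_half by simp
  have e1: "2 * e \<le> kx ks M + 1" "kx ks M \<le> 2 * e" unfolding e_def by presburger+
  have big0: "kx ks a = 0" if "M + 1 \<le> a" for a using kx_mono[OF s, of "M+1" a] that z0 by simp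
  have kM: "kx ks M \<le> kx ks i" if "1 \<le> i" "i \<le> M" for i using kx_mono[OF s, of i M] that by simp
  have "z \<notin> rat_zeros (gpoch d (2 * length ks) (phi2 ks) * C2_num d ks) (C2_den d ks)"
  proof (rule C2_key2[OF d s, where J = "\<lambda>j. j = M" and vv = "kx ks M div 2"])
    fix i j assume ij: "i \<in> {1..length ks}" "j \<in> {i+1..length ks}" "P2 d ks z i j \<noteq> 0"
    obtain t where t: "t < kx ks j - kx ks (j+1)"
      and z: "z = complex_of_real ((1 + d*(real (i+j) - 1) - real (kx ks i + kx ks (j+1)) - real t) / 2)"
      using P2_nz[OF ij(3)] by blast
    have jM: "j \<le> M"
    proof (rule ccontr)
      assume "\<not> j \<le> M" then have "kx ks j = 0" using big0 by simp
      then show False using t by simp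
    qed
    have kij: "kx ks M \<le> kx ks i" using kM[of i] ij jM by simp
    show "j = M \<and> (kx ks i + kx ks (j+1)) div 2 \<le> kx ks M div 2 \<and> kx ks M div 2 < kx ks j \<and>
        z = complex_of_real (d/2*(real (i+j) - 1) - real (kx ks M div 2))"
    proof (cases "2 * e \<le> kx ks i + kx ks (j+1) + t")
      case True
      have "d * (real (i+j) - 1) \<le> d * (2 * real M - 1)" using d ij jM by simp
      moreover have "2 * real e \<le> real (kx ks i + kx ks (j+1)) + real t"
      proof -
        have "real (2 * e) \<le> real (kx ks i + kx ks (j+1) + t)" using True by (simp only: of_nat_le_iff)
        then show ?thesis by simp
      qed
      ultimately have "(1 + d*(real (i+j) - 1) - real (kx ks i + kx ks (j+1)) - real t) / 2
          \<le> d / 2 * (2 * real M - 1) - real e + 1 / 2" by (simp add: field_simps)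
      then show ?thesis using H z by blast
    next
      case False
      have jj: "j = M"
      proof (rule ccontr)
        assume "j \<noteq> M" then have "kx ks M \<le> kx ks (j+1)" using kM[of "j+1"] jM ij by simp
        then show False using False kij e1 by presburger
      qed
      have v: "kx ks (j+1) = 0" "kx ks i = kx ks M" "t = 0" "kx ks M = 2 * e - 1" "1 \<le> e"
        using z0 jj False kij e1 by auto
      have dv: "kx ks M div 2 = e - 1" using v(4,5) by presburger
      have e2: "(1 + d*(real (i+j) - 1) - real (kx ks i + kx ks (j+1)) - real t) / 2 = d/2*(real (i+j) - 1) - real (kx ks M div 2)"
        using v dv by (simp add: of_nat_diff field_simps)
      have "kx ks M div 2 < kx ks j" using jj v(4,5) dv by simp
      then show ?thesis using z[unfolded e2] v jj by simp
    qed
  next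
    fix j j' assume "j = M" "j' = M" then show "j = j'" by simp
  next
    fix i assume i: "i \<in> {1..length ks}"
    show "Ps d ks z i = 0"
    proof (rule ccontr)
      assume nz: "Ps d ks z i \<noteq> 0"
      obtain t where t: "t < kx ks i - cc ks i" and z: "z = complex_of_real (1/2 + d/2*(2*real i - 1) - real (cc ks i) - real t)"
        using Ps_nz[OF nz] by blast
      have c2: "kx ks i + kx ks (i+1) \<le> 2 * cc ks i" by (rule cc_ge)
      have "1 \<le> kx ks i" using t by simp
      then have im: "i \<le> M" using big0[of i] by (cases "M + 1 \<le> i") auto
      have "d * (2 * real i - 1) \<le> d * (2 * real M - 1)" using d im by simp
      moreover have "real e \<le> real (cc ks i)"
      proof -
        have "kx ks M \<le> 2 * cc ks i" using kM[of i] im i c2 by simp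
        then have "e \<le> cc ks i" unfolding e_def by presburger
        then show ?thesis by simp
      qed
      ultimately have "1/2 + d/2*(2*real i - 1) - real (cc ks i) - real t \<le> d / 2 * (2 * real M - 1) - real e + 1 / 2"
        by (simp add: field_simps)
      then show False using H z by blast
    qed
  qed
  then show False using zZ by blast
qed




lemma thresh: assumes s: "sorted_wrt (\<ge>) ks" and c: "1 \<le> c"
  shows "\<exists>A. A \<le> length ks \<and> (\<forall>i. 1 \<le> i \<longrightarrow> (c \<le> kx ks i \<longleftrightarrow> i \<le> A))"
proof -
  define A where "A = (LEAST a. \<not> c \<le> kx ks (a+1))"
  have ex: "\<not> c \<le> kx ks (length ks + 1)" using c by (simp add: kx_def)
  have A1: "\<not> c \<le> kx ks (A+1)" unfolding A_def by (rule LeastI[of _ "length ks"]) (use ex in simp)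
  have An: "A \<le> length ks" unfolding A_def by (rule Least_le) (use ex in simp)
  have "c \<le> kx ks i \<longleftrightarrow> i \<le> A" if i: "1 \<le> i" for i
  proof
    assume "c \<le> kx ks i"
    show "i \<le> A"
    proof (rule ccontr)
      assume "\<not> i \<le> A"
      then have "kx ks i \<le> kx ks (A+1)" using kx_mono[OF s, of "A+1" i] by simp
      then show False using A1 \<open>c \<le> kx ks i\<close> by simp
    qed
  next
    assume "i \<le> A"
    then have "i - 1 < A" using i by simp
    then have "c \<le> kx ks (i - 1 + 1)" unfolding A_def using not_less_Least by blast
    then show "c \<le> kx ks i" using i by simp
  qed
  then show ?thesis using An by blast
qed


lemma sum_single: assumes "finite S" "\<And>i. i \<in> S \<Longrightarrow> f i \<noteq> 0 \<Longrightarrow> i = i0"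
  shows "sum f S = (if i0 \<in> S then f i0 else (0::nat))"
proof -
  have "sum f S = (\<Sum>i\<in>S. if i = i0 then f i0 else 0)"
    using assms(2) by (intro sum.cong refl) (metis)
  also have "\<dots> = (if i0 \<in> S then f i0 else 0)" using assms(1) by (simp add: sum.delta)
  finally show ?thesis .
qed

lemma ind_ofreal_nz: "ind (complex_of_real y) L \<noteq> 0 \<Longrightarrow> \<exists>t. t < L \<and> y = real t"
proof -
  assume "ind (complex_of_real y) L \<noteq> 0"
  then obtain t where "t < L" "complex_of_real y = of_nat t" using ind_nz by blast
  moreover then have "complex_of_real y = complex_of_real (real t)" by simp
  ultimately show ?thesis by (metis of_real_eq_iff)
qed

lemma ind_ofreal_one: "y = real a \<Longrightarrow> a < L \<Longrightarrow> ind (complex_of_real y) L = 1"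
  using ind_nat1[of a L] by simp

lemma P2_at: "P2 d ks (complex_of_real w) i j = ind (complex_of_real (1 + d*(real (i+j) - 1) - 2*w - real (kx ks i + kx ks (j+1)))) (kx ks j - kx ks (j+1))"
proof -
  have "1 + complex_of_real (d*(real (i+j) - 1)) - 2*complex_of_real w - of_nat (kx ks i + kx ks (j+1))
      = complex_of_real (1 + d*(real (i+j) - 1) - 2*w - real (kx ks i + kx ks (j+1)))" by simp
  then show ?thesis unfolding P2_def by simp
qed

lemma Ps_at: "Ps d ks (complex_of_real w) i = ind (complex_of_real (1/2 + d/2*(2*real i - 1) - w - real (cc ks i))) (kx ks i - cc ks i)"
proof -
  have "1/2 + complex_of_real (d/2*(2*real i - 1)) - complex_of_real w - of_nat (cc ks i)
      = complex_of_real (1/2 + d/2*(2*real i - 1) - w - real (cc ks i))" by simp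
  then show ?thesis unfolding Ps_def by simp
qed

lemma Od_at: "Od d ks (complex_of_real w) i = ind (complex_of_real (d/2*(2*real i - 1) - w)) ((kx ks i + kx ks (i+1)) div 2)"
  unfolding Od_def by simp

lemma Ds_at: "Ds d ks (complex_of_real w) i = ind (complex_of_real (d*(real i - 1) - w)) (kx ks i)"
  unfolding Ds_def by simp

locale AB =
  fixes ks :: "nat list" and A B :: nat and d :: real
  assumes s: "sorted_wrt (\<ge>) ks"
    and hA: "\<And>i. 1 \<le> i \<Longrightarrow> (2 \<le> kx ks i \<longleftrightarrow> i \<le> A)"
    and hB: "\<And>i. 1 \<le> i \<Longrightarrow> (1 \<le> kx ks i \<longleftrightarrow> i \<le> B)"
    and Bn: "B \<le> length ks"
    and d: "d > 0"
begin

lemma AleB: "A \<le> B"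
proof (cases "A = 0")
  case False
  then have "2 \<le> kx ks A" using hA[of A] by simp
  then show ?thesis using hB[of A] False by simp
qed simp

lemma kA: "1 \<le> i \<Longrightarrow> i \<le> A \<Longrightarrow> 2 \<le> kx ks i" using hA by blast
lemma kAB: "A < i \<Longrightarrow> i \<le> B \<Longrightarrow> kx ks i = 1" using hA[of i] hB[of i] by auto
lemma kB: "B < i \<Longrightarrow> kx ks i = 0" using hB[of i] by auto
lemma kle1: "A < i \<Longrightarrow> kx ks i \<le> 1" using hA[of i] by auto

lemma dle: "x \<le> y \<Longrightarrow> d * x \<le> d * y" using d by simp
lemma dlt: "x < y \<Longrightarrow> d * x < d * y" using d by simp

lemma T1: assumes ij: "1 \<le> i" "i < j"
  shows "P2 d ks (complex_of_real (d/2*real (A+B))) i j = (if i = A+1 \<and> j = B then 1 else 0)"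
proof (cases "i = A+1 \<and> j = B")
  case True
  have k1: "kx ks (A+1) = 1" "kx ks B = 1" "kx ks (B+1) = 0" using kAB[of "A+1"] kAB[of B] kB[of "B+1"] True ij AleB by auto
  have e: "1 + d*(real (i+j) - 1) - 2*(d/2*real (A+B)) - real (kx ks i + kx ks (j+1)) = real (0::nat)"
    using True k1 by (simp add: field_simps)
  have "P2 d ks (complex_of_real (d/2*real (A+B))) i j = 1"
    unfolding P2_at by (rule ind_ofreal_one[OF e]) (use k1 True in simp)
  then show ?thesis using True by simp
next
  case False
  show ?thesis
  proof (rule ccontr)
    assume "\<not> ?thesis"
    then have "P2 d ks (complex_of_real (d/2*real (A+B))) i j \<noteq> 0" by (simp only: if_not_P[OF False] not_False_eq_True simp_thms)
    then have "ind (complex_of_real (1 + d*(real (i+j) - 1) - 2*(d/2*real (A+B)) - real (kx ks i + kx ks (j+1)))) (kx ks j - kx ks (j+1)) \<noteq> 0"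
      by (simp only: P2_at not_False_eq_True)
    then obtain t where t: "t < kx ks j - kx ks (j+1)"
      and y: "1 + d*(real (i+j) - 1) - 2*(d/2*real (A+B)) - real (kx ks i + kx ks (j+1)) = real t"
      using ind_ofreal_nz by blast
    have y': "1 + d*(real i + real j - 1 - real A - real B) - real (kx ks i) - real (kx ks (j+1)) = real t"
      using y by (simp add: field_simps)
    show False
    proof (cases "j \<le> A")
      case True
      have "2 \<le> kx ks i" using kA ij True by simp
      moreover have "d*(real i + real j - 1 - real A - real B) \<le> d*(-2)"
        using ij True AleB by (intro dle) linarith
      ultimately show False using y' d by linarith
    next
      case jA: False
      have "kx ks j \<le> 1" using kle1 jA by simp
      then have kj: "kx ks j = 1" "kx ks (j+1) = 0" using t by auto
      then have jB: "j = B" using hB[of j] hB[of "j+1"] ij by auto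
      have t0: "t = 0" using t kj by simp
      have ij': "i \<noteq> A+1" using False jB by simp
      show False
      proof (cases "i \<le> A")
        case True
        have "2 \<le> kx ks i" using kA ij True by simp
        moreover have "d*(real i + real j - 1 - real A - real B) \<le> d*(-1)"
          using True jB by (intro dle) linarith
        ultimately show False using y' d kj t0 by linarith
      next
        case iA: False
        then have "A + 2 \<le> i" using ij' by simp
        then have "d*1 \<le> d*(real i + real j - 1 - real A - real B)" using jB by (intro dle) linarith
        moreover have "kx ks i \<le> 1" using kle1 iA by simp
        ultimately show False using y' d kj t0 by linarith
      qed
    qed
  qed
qed

lemma T2: assumes i: "1 \<le> i" shows "Ps d ks (complex_of_real (d/2*real (A+B))) i = 0"
proof (rule ccontr)
  assume "Ps d ks (complex_of_real (d/2*real (A+B))) i \<noteq> 0"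
  then obtain t where t: "t < kx ks i - cc ks i"
    and y: "1/2 + d/2*(2*real i - 1) - d/2*real (A+B) - real (cc ks i) = real t"
    unfolding Ps_at using ind_ofreal_nz by blast
  have c2: "kx ks i + kx ks (i+1) \<le> 2 * cc ks i" by (rule cc_ge)
  have "2 \<le> kx ks i" using t c2 by linarith
  then have iA: "i \<le> A" using hA i by simp
  have c1: "1 \<le> cc ks i" using c2 \<open>2 \<le> kx ks i\<close> by linarith
  have "d*(2*real i - 1 - real A - real B) \<le> d*(-1)" using iA AleB by (intro dle) linarith
  then show False using y c1 d by (simp add: field_simps)
qed

lemma T3: assumes i: "1 \<le> i"
  shows "Od d ks (complex_of_real (d/2*real (A+B))) i = (if 2*i = A+B+1 \<and> A < i \<and> i+1 \<le> B then 1 else 0)"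
proof (cases "2*i = A+B+1 \<and> A < i \<and> i+1 \<le> B")
  case True
  have k: "kx ks i = 1" "kx ks (i+1) = 1" using kAB True by auto
  have e: "d/2*(2*real i - 1) - d/2*real (A+B) = real (0::nat)"
  proof -
    have "2*real i = real (A+B) + 1" using True by (metis of_nat_1 of_nat_add of_nat_mult of_nat_numeral)
    then show ?thesis by (simp add: field_simps)
  qed
  have "Od d ks (complex_of_real (d/2*real (A+B))) i = 1"
    unfolding Od_at by (rule ind_ofreal_one[OF e]) (use k in simp)
  then show ?thesis using True by simp
next
  case False
  show ?thesis
  proof (rule ccontr)
    assume "\<not> ?thesis"
    then have "Od d ks (complex_of_real (d/2*real (A+B))) i \<noteq> 0" by (simp only: if_not_P[OF False] not_False_eq_True simp_thms)
    then have "ind (complex_of_real (d/2*(2*real i - 1) - d/2*real (A+B))) ((kx ks i + kx ks (i+1)) div 2) \<noteq> 0"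
      by (simp only: Od_at not_False_eq_True)
    then obtain t where t: "t < (kx ks i + kx ks (i+1)) div 2"
      and y: "d/2*(2*real i - 1) - d/2*real (A+B) = real t" using ind_ofreal_nz by blast
    have y': "d*(2*real i - 1 - real A - real B) = 2 * real t" using y by (simp add: field_simps)
    have ki1: "kx ks (i+1) \<le> kx ks i" using kx_mono[OF s, of i "i+1"] i by simp
    have s2: "2 \<le> kx ks i + kx ks (i+1)" using t by linarith
    then have "1 \<le> kx ks i" using ki1 by linarith
    then have iB: "i \<le> B" using hB i by simp
    show False
    proof (cases "i \<le> A")
      case True
      have "d*(2*real i - 1 - real A - real B) \<le> d*(-1)" using True AleB by (intro dle) linarith
      then show False using y' d by simp
    next
      case iA: False
      have "kx ks i \<le> 1" "kx ks (i+1) \<le> 1" using kle1 iA by auto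
      then have k11: "kx ks i = 1" "kx ks (i+1) = 1" "t = 0" using s2 t by auto
      then have "i + 1 \<le> B" using hB[of "i+1"] by simp
      have "d*(2*real i - 1 - real A - real B) = 0" using y' k11 by simp
      then have "2*real i - 1 - real A - real B = 0" using d by simp
      then have "2*i = A+B+1" by linarith
      then show False using False iA \<open>i + 1 \<le> B\<close> by simp
    qed
  qed
qed

lemma T4: assumes i: "1 \<le> i"
  shows "Ds d ks (complex_of_real (d/2*real (A+B))) i = (if 2*i = A+B+2 \<and> A < i \<and> i \<le> B then 1 else 0)"
proof (cases "2*i = A+B+2 \<and> A < i \<and> i \<le> B")
  case True
  have k: "kx ks i = 1" using kAB True by auto
  have e: "d*(real i - 1) - d/2*real (A+B) = real (0::nat)"
  proof -
    have "2*real i = real (A+B) + 2" using True by (metis of_nat_add of_nat_mult of_nat_numeral)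
    then show ?thesis by (simp add: field_simps)
  qed
  have "Ds d ks (complex_of_real (d/2*real (A+B))) i = 1"
    unfolding Ds_at by (rule ind_ofreal_one[OF e]) (use k in simp)
  then show ?thesis using True by simp
next
  case False
  show ?thesis
  proof (rule ccontr)
    assume "\<not> ?thesis"
    then have "Ds d ks (complex_of_real (d/2*real (A+B))) i \<noteq> 0" by (simp only: if_not_P[OF False] not_False_eq_True simp_thms)
    then have "ind (complex_of_real (d*(real i - 1) - d/2*real (A+B))) (kx ks i) \<noteq> 0"
      by (simp only: Ds_at not_False_eq_True)
    then obtain t where t: "t < kx ks i"
      and y: "d*(real i - 1) - d/2*real (A+B) = real t" using ind_ofreal_nz by blast
    have y': "d*(2*real i - 2 - real A - real B) = 2 * real t" using y by (simp add: field_simps)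
    have iB: "i \<le> B" using hB[OF i] t by simp
    show False
    proof (cases "i \<le> A")
      case True
      have "d*(2*real i - 2 - real A - real B) \<le> d*(-1)" using True AleB by (intro dle) linarith
      then show False using y' d by simp
    next
      case iA: False
      have "kx ks i = 1" using kAB iA iB by simp
      then have "t = 0" using t by simp
      then have "d*(2*real i - 2 - real A - real B) = 0" using y' by simp
      then have "2*real i - 2 - real A - real B = 0" using d by simp
      then have "2*i = A+B+2" by linarith
      then show False using False iA iB by simp
    qed
  qed
qed

lemma U1: assumes ij: "1 \<le> i" "i < j"
  shows "P2 d ks (complex_of_real (d/2*(real (A+B) - 1))) i j = 0"
proof (rule ccontr)
  assume "P2 d ks (complex_of_real (d/2*(real (A+B) - 1))) i j \<noteq> 0"
  then have "ind (complex_of_real (1 + d*(real (i+j) - 1) - 2*(d/2*(real (A+B) - 1)) - real (kx ks i + kx ks (j+1)))) (kx ks j - kx ks (j+1)) \<noteq> 0"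
    by (simp only: P2_at not_False_eq_True)
  then obtain t where t: "t < kx ks j - kx ks (j+1)"
    and y: "1 + d*(real (i+j) - 1) - 2*(d/2*(real (A+B) - 1)) - real (kx ks i + kx ks (j+1)) = real t"
    using ind_ofreal_nz by blast
  have y': "1 + d*(real i + real j - real A - real B) - real (kx ks i) - real (kx ks (j+1)) = real t"
    using y by (simp add: field_simps)
  show False
  proof (cases "j \<le> A")
    case True
    have "2 \<le> kx ks i" using kA ij True by simp
    moreover have "d*(real i + real j - real A - real B) \<le> d*(-1)"
      using ij True AleB by (intro dle) linarith
    ultimately show False using y' d by linarith
  next
    case jA: False
    have "kx ks j \<le> 1" using kle1 jA by simp
    then have kj: "kx ks j = 1" "kx ks (j+1) = 0" using t by auto
    then have jB: "j = B" using hB[of j] hB[of "j+1"] ij by auto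
    have t0: "t = 0" using t kj by simp
    show False
    proof (cases "i \<le> A")
      case True
      have "2 \<le> kx ks i" using kA ij True by simp
      moreover have "d*(real i + real j - real A - real B) \<le> d*0"
        using True jB by (intro dle) linarith
      ultimately show False using y' d kj t0 by linarith
    next
      case iA: False
      have "d*1 \<le> d*(real i + real j - real A - real B)" using jB iA by (intro dle) linarith
      moreover have "kx ks i = 1" using kAB iA ij jB by simp
      ultimately show False using y' d kj t0 by linarith
    qed
  qed
qed

lemma U2: assumes i: "1 \<le> i" shows "Ps d ks (complex_of_real (d/2*(real (A+B) - 1))) i = 0"
proof (rule ccontr)
  assume "Ps d ks (complex_of_real (d/2*(real (A+B) - 1))) i \<noteq> 0"
  then obtain t where t: "t < kx ks i - cc ks i"
    and y: "1/2 + d/2*(2*real i - 1) - d/2*(real (A+B) - 1) - real (cc ks i) = real t"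
    unfolding Ps_at using ind_ofreal_nz by blast
  have c2: "kx ks i + kx ks (i+1) \<le> 2 * cc ks i" by (rule cc_ge)
  have "2 \<le> kx ks i" using t c2 by linarith
  then have iA: "i \<le> A" using hA i by simp
  have c1: "1 \<le> cc ks i" using c2 \<open>2 \<le> kx ks i\<close> by linarith
  have "d*(2*real i - real A - real B) \<le> d*0" using iA AleB by (intro dle) linarith
  then show False using y c1 d by (simp add: field_simps)
qed

lemma m_eq: assumes m: "1 \<le> m" "m \<le> 2 * length ks - 1" and p0: "phi2 ks (m+1) = 0" and p1: "phi2 ks m \<noteq> 0"
  shows "m = A + B"
proof (rule antisym)
  have mm: "m + 1 \<le> 2 * length ks" using m by linarith
  obtain i j where ij: "1 \<le> i" "i \<le> j" "j \<le> length ks + 1" "i + j = m + 1 + 1" "phi2 ks (m+1) = (kx ks i + kx ks j) div 2"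
    using phi2_ex[of "m+1" ks] mm by auto
  have "kx ks j \<le> kx ks i" using kx_mono[OF s, of i j] ij by simp
  then have "kx ks j = 0" "kx ks i \<le> 1" using ij p0 by auto
  then have "B < j" "A < i" using hB[of j] hA[of i] ij by auto
  then show "A + B \<le> m" using ij by simp
next
  show "m \<le> A + B"
  proof (rule ccontr)
    assume "\<not> m \<le> A + B"
    then have mg: "A + B + 1 \<le> m" by simp
    define j where "j = min (length ks + 1) (m - A)"
    define i where "i = m + 1 - j"
    have j1: "B + 1 \<le> j" "j \<le> length ks + 1" "j \<le> m - A" using mg Bn unfolding j_def by auto
    have i1: "A + 1 \<le> i" "i + j = m + 1" unfolding i_def using j1 mg by auto
    have ij: "i \<le> j"
    proof (cases "j = m - A")
      case True then show ?thesis using i1 mg AleB by simp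
    next
      case False then have "j = length ks + 1" unfolding j_def by auto
      then show ?thesis using i1 m by simp
    qed
    have "phi2 ks m \<le> (kx ks i + kx ks j) div 2" by (rule phi2_le) (use i1 j1 ij m in auto)
    moreover have "kx ks j = 0" using kB j1 by simp
    moreover have "kx ks i \<le> 1" using kle1 i1 by simp
    ultimately show False using p1 by simp
  qed
qed


lemma C2_holo_AB: assumes AB1: "1 \<le> A + B"
  shows "rat_holo_nonzero_at (C2_num d ks) (C2_den d ks) (complex_of_real (d / 2 * real (A+B))) \<and>
      rat_pole_at (C2_num d ks) (C2_den d ks) (complex_of_real (d / 2 * (real (A+B) - 1)))"
proof -
  let ?n = "length ks"
  let ?z1 = "complex_of_real (d / 2 * real (A+B))"
  let ?z0 = "complex_of_real (d / 2 * (real (A+B) - 1))"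
  have oN: "order z (C2_num d ks) = SA2 d ks z + (\<Sum>i\<in>{1..?n}. \<Sum>j\<in>{i+1..?n}. P2 d ks z i j)
     + (\<Sum>i\<in>{1..?n}. Ev d ks z i) + (\<Sum>i\<in>{1..?n}. Ps d ks z i)" for z by (rule ordN2[OF s])
  have oD: "order z (C2_den d ks) = SA2 d ks z + (\<Sum>i\<in>{1..?n}. Ev d ks z i) + (\<Sum>i\<in>{1..?n}. Od d ks z i)
     + (\<Sum>i\<in>{1..?n}. Ds d ks z i)" for z using ordD2[OF s, of z d] by (simp add: sum.distrib)
  have L1: "(\<Sum>i\<in>{1..?n}. \<Sum>j\<in>{i+1..?n}. P2 d ks ?z1 i j) = (if A + 1 < B then 1 else 0)"
  proof -
    have "(\<Sum>i\<in>{1..?n}. \<Sum>j\<in>{i+1..?n}. P2 d ks ?z1 i j) = (\<Sum>i\<in>{1..?n}. \<Sum>j\<in>{i+1..?n}. if i = A+1 \<and> j = B then 1 else 0)"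
    proof (intro sum.cong refl)
      fix i j assume "i \<in> {1..?n}" "j \<in> {i+1..?n}"
      then show "P2 d ks ?z1 i j = (if i = A+1 \<and> j = B then 1 else 0)" by (intro T1) auto
    qed
    also have "\<dots> = (\<Sum>i\<in>{1..?n}. if i = A+1 then (\<Sum>j\<in>{i+1..?n}. if j = B then 1 else 0) else 0)"
      by (intro sum.cong refl) auto
    also have "\<dots> = (if A + 1 < B then 1 else 0)" using Bn by (simp add: sum.delta)
    finally show ?thesis .
  qed
  have L2: "(\<Sum>i\<in>{1..?n}. Ps d ks ?z1 i) = 0" using T2 by simp
  define c where "c = (A+B+1) div 2"
  define c' where "c' = (A+B+2) div 2"
  have R1: "(\<Sum>i\<in>{1..?n}. Od d ks ?z1 i) = (if 2*c = A+B+1 \<and> A < c \<and> c+1 \<le> B then 1 else 0)"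
  proof -
    have "(\<Sum>i\<in>{1..?n}. Od d ks ?z1 i) = (if c \<in> {1..?n} then Od d ks ?z1 c else 0)"
    proof (rule sum_single)
      fix i assume "i \<in> {1..?n}" "Od d ks ?z1 i \<noteq> 0"
      then show "i = c" using T3[of i] unfolding c_def by (auto split: if_splits)
    qed simp
    also have "\<dots> = (if 2*c = A+B+1 \<and> A < c \<and> c+1 \<le> B then 1 else 0)"
      using T3[of c] Bn by auto
    finally show ?thesis .
  qed
  have R2: "(\<Sum>i\<in>{1..?n}. Ds d ks ?z1 i) = (if 2*c' = A+B+2 \<and> A < c' \<and> c' \<le> B then 1 else 0)"
  proof -
    have "(\<Sum>i\<in>{1..?n}. Ds d ks ?z1 i) = (if c' \<in> {1..?n} then Ds d ks ?z1 c' else 0)"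
    proof (rule sum_single)
      fix i assume "i \<in> {1..?n}" "Ds d ks ?z1 i \<noteq> 0"
      then show "i = c'" using T4[of i] unfolding c'_def by (auto split: if_splits)
    qed simp
    also have "\<dots> = (if 2*c' = A+B+2 \<and> A < c' \<and> c' \<le> B then 1 else 0)"
      using T4[of c'] Bn by auto
    finally show ?thesis .
  qed
  have arith: "(if A + 1 < B then 1 else 0) = (if 2*c = A+B+1 \<and> A < c \<and> c+1 \<le> B then 1 else 0)
      + (if 2*c' = A+B+2 \<and> A < c' \<and> c' \<le> B then (1::nat) else 0)"
    using AleB unfolding c_def c'_def by presburger
  have H: "order ?z1 (C2_num d ks) = order ?z1 (C2_den d ks)"
    unfolding oN oD L1 L2 R1 R2 using arith by simp
  have P0: "(\<Sum>i\<in>{1..?n}. \<Sum>j\<in>{i+1..?n}. P2 d ks ?z0 i j) = 0" by (intro dsum_zero U1) auto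
  have P0': "(\<Sum>i\<in>{1..?n}. Ps d ks ?z0 i) = 0" using U2 by simp
  have ex: "1 \<le> (\<Sum>i\<in>{1..?n}. Od d ks ?z0 i) + (\<Sum>i\<in>{1..?n}. Ds d ks ?z0 i)"
  proof (cases "A = B")
    case True
    then have A1: "1 \<le> A" using AB1 by simp
    have k: "2 \<le> kx ks A" using kA A1 by simp
    have e: "d/2*(2*real A - 1) - d/2*(real (A+B) - 1) = real (0::nat)" using True by simp
    have "Od d ks ?z0 A = 1" unfolding Od_at by (rule ind_ofreal_one[OF e]) (use k in simp)
    moreover have "Od d ks ?z0 A \<le> (\<Sum>i\<in>{1..?n}. Od d ks ?z0 i)" by (rule member_le_sum) (use A1 True Bn in auto)
    ultimately show ?thesis by linarith
  next
    case False
    then have AB: "A < B" using AleB by simp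
    show ?thesis
    proof (cases "even (A+B)")
      case True
      then obtain c where c: "A + B = 2*c" by blast
      have cr: "A < c" "c + 1 \<le> B" "1 \<le> c" using c AB True by presburger+
      have k: "kx ks c = 1" "kx ks (c+1) = 1" using kAB cr by auto
      have e: "d/2*(2*real c - 1) - d/2*(real (A+B) - 1) = real (0::nat)"
      proof -
        have "real (A+B) = 2 * real c" using c by simp
        then show ?thesis by simp
      qed
      have "Od d ks ?z0 c = 1" unfolding Od_at by (rule ind_ofreal_one[OF e]) (use k in simp)
      moreover have "Od d ks ?z0 c \<le> (\<Sum>i\<in>{1..?n}. Od d ks ?z0 i)" by (rule member_le_sum) (use cr Bn in auto)
      ultimately show ?thesis by linarith
    next
      case False
      then obtain c where c: "A + B + 1 = 2*c" by (metis evenE odd_even_add odd_one)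
      have cr: "A < c" "c \<le> B" "1 \<le> c" using c AB by presburger+
      have k: "kx ks c = 1" using kAB cr by auto
      have e: "d*(real c - 1) - d/2*(real (A+B) - 1) = real (0::nat)"
      proof -
        have "real (A+B) + 1 = 2 * real c" using c by (metis of_nat_1 of_nat_add of_nat_mult of_nat_numeral)
        then have r: "real (A+B) = 2 * real c - 1" by simp
        have "d*(real c - 1) - d/2*(real (A+B) - 1) = d*(real c - 1) - d/2*((2 * real c - 1) - 1)" by (simp only: r)
        also have "\<dots> = 0" by (simp add: field_simps)
        finally show ?thesis by simp
      qed
      have "Ds d ks ?z0 c = 1" unfolding Ds_at by (rule ind_ofreal_one[OF e]) (use k in simp)
      moreover have "Ds d ks ?z0 c \<le> (\<Sum>i\<in>{1..?n}. Ds d ks ?z0 i)" by (rule member_le_sum) (use cr Bn in auto)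
      ultimately show ?thesis by linarith
    qed
  qed
  have "order ?z0 (C2_num d ks) < order ?z0 (C2_den d ks)"
    unfolding oN oD P0 P0' using ex by linarith
  then show ?thesis using H unfolding rat_holo_nonzero_at_def rat_pole_at_def by simp
qed

end




lemma C2_holo:
  assumes d: "d > 0" and s: "sorted_wrt (\<ge>) ks" and m: "1 \<le> m" "m \<le> 2 * length ks - 1"
  and p0: "phi2 ks (m+1) = 0" and p1: "phi2 ks m \<noteq> 0"
  shows "rat_holo_nonzero_at (C2_num d ks) (C2_den d ks) (complex_of_real (d / 2 * real m)) \<and>
      rat_pole_at (C2_num d ks) (C2_den d ks) (complex_of_real (d / 2 * (real m - 1)))"
proof -
  obtain A where A: "A \<le> length ks" "\<forall>i. 1 \<le> i \<longrightarrow> (2 \<le> kx ks i \<longleftrightarrow> i \<le> A)" using thresh[OF s, of 2] by auto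
  obtain B where B: "B \<le> length ks" "\<forall>i. 1 \<le> i \<longrightarrow> (1 \<le> kx ks i \<longleftrightarrow> i \<le> B)" using thresh[OF s, of 1] by auto
  interpret AB ks A B d using s A B d by unfold_locales auto
  have "m = A + B" by (rule m_eq[OF m p0 p1])
  then show ?thesis using C2_holo_AB m by simp
qed

theorem proposition6p5:
  fixes d d2 :: real and ks :: "nat list"
  defines "r2 \<equiv> length ks" and "k \<equiv> kx ks"
  assumes "d > 0" and "d2 > 0" and "r2 \<ge> 1"
    and "sorted_wrt (\<ge>) ks"
  shows
  "(r2 = 2 \<longrightarrow>
      (k 2 > 0 \<longrightarrow> rat_zeros (gpoch d r2 (phi1 ks) * C1a_num d d2 ks) (C1a_den d ks)
          \<subseteq> complex_of_real ` {(d - d2) / 2 - real (k 1 + k 2) + 1 .. (d - d2) / 2 - real (k 1)}) \<and>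
      (k 2 = 0 \<longrightarrow> rat_zeros (gpoch d r2 (phi1 ks) * C1a_num d d2 ks) (C1a_den d ks) = {}))
   \<and>
   (d2 = d / 2 \<longrightarrow> (\<forall>m1 m2. 2 \<le> m1 \<and> m1 \<le> m2 \<and> m2 \<le> r2 \<and>
        (\<forall>a. 2 \<le> a \<and> a \<le> m1 \<longrightarrow> k a = k 2) \<and> k (m2 + 1) = 0 \<longrightarrow>
      (k 1 > k 2 \<and> k 2 > 0 \<longrightarrow> rat_zeros (gpoch d r2 (phi1 ks) * C1b_num d ks) (C1b_den d ks)
          \<subseteq> complex_of_real ` {d / 4 * (real m1 - 1) - real (k 1 + k 2) + 1 ..
                                  d / 4 * (2 * real m2 - 3) - real (k (m2 - 1))}) \<and>
      (k 1 = k 2 \<and> k 2 > 0 \<longrightarrow> rat_zeros (gpoch d r2 (phi1 ks) * C1b_num d ks) (C1b_den d ks)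
          \<subseteq> complex_of_real ` {d / 4 * (2 * real_of_int \<lceil>real m1 / 2\<rceil> - 1) - real (k 1 + k 2) + 1 ..
                                  d / 4 * (2 * real m2 - 3) - real (k (m2 - 1))}) \<and>
      (k 2 = 0 \<longrightarrow> rat_zeros (gpoch d r2 (phi1 ks) * C1b_num d ks) (C1b_den d ks) = {})))
   \<and>
   (\<forall>m1 m2 m3. 1 \<le> m1 \<and> 1 \<le> m2 \<and> 1 \<le> m3 \<and> m1 \<le> r2 \<and> m2 \<le> r2 \<and> m3 \<le> r2 \<and>
        m1 \<le> m3 \<and> m2 \<le> m3 \<and> k 1 \<le> k m1 + 1 \<and>
        (\<forall>a. m2 + 1 \<le> a \<and> a \<le> m3 \<longrightarrow> k a = 1) \<and> k (m3 + 1) = 0 \<longrightarrow>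
      (k 1 \<ge> 2 \<and> m2 < m3 \<longrightarrow> rat_zeros (gpoch d (2 * r2) (phi2 ks) * C2_num d ks) (C2_den d ks)
          \<subseteq> complex_of_real ` {d / 2 * real m1 - real (k 1) + 3 / 2 ..
                                  d / 2 * (real (m2 + m3) - 1) - real (k m2) / 2 + 1 / 2}) \<and>
      (k 1 \<ge> 2 \<and> m2 = m3 \<longrightarrow> rat_zeros (gpoch d (2 * r2) (phi2 ks) * C2_num d ks) (C2_den d ks)
          \<subseteq> complex_of_real ` {d / 2 * real m1 - real (k 1) + 3 / 2 ..
                                  d / 2 * (2 * real m3 - 1) - real_of_int \<lceil>real (k m3) / 2\<rceil> + 1 / 2}) \<and>
      (k 1 \<le> 1 \<longrightarrow> rat_zeros (gpoch d (2 * r2) (phi2 ks) * C2_num d ks) (C2_den d ks) = {}))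
   \<and>
   (r2 = 2 \<longrightarrow> (\<forall>m. 1 \<le> m \<and> m \<le> r2 - 1 \<and> phi1 ks (m + 1) = 0 \<and> phi1 ks m \<noteq> 0 \<longrightarrow>
      rat_holo_nonzero_at (C1a_num d d2 ks) (C1a_den d ks) (complex_of_real (d / 2 * real m)) \<and>
      rat_pole_at (C1a_num d d2 ks) (C1a_den d ks) (complex_of_real (d / 2 * (real m - 1)))))
   \<and>
   (d2 = d / 2 \<longrightarrow> (\<forall>m. 1 \<le> m \<and> m \<le> r2 - 1 \<and> phi1 ks (m + 1) = 0 \<and> phi1 ks m \<noteq> 0 \<longrightarrow>
      rat_holo_nonzero_at (C1b_num d ks) (C1b_den d ks) (complex_of_real (d / 2 * real m)) \<and>
      rat_pole_at (C1b_num d ks) (C1b_den d ks) (complex_of_real (d / 2 * (real m - 1)))))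
   \<and>
   (\<forall>m. 1 \<le> m \<and> m \<le> 2 * r2 - 1 \<and> phi2 ks (m + 1) = 0 \<and> phi2 ks m \<noteq> 0 \<longrightarrow>
      rat_holo_nonzero_at (C2_num d ks) (C2_den d ks) (complex_of_real (d / 2 * real m)) \<and>
      rat_pole_at (C2_num d ks) (C2_den d ks) (complex_of_real (d / 2 * (real m - 1))))"
proof -
  note d = assms(3) and s = assms(6)
  let ?Z = "rat_zeros (gpoch d (2 * length ks) (phi2 ks) * C2_num d ks) (C2_den d ks)"
  have P1: "length ks = 2 \<longrightarrow>
      (kx ks 2 > 0 \<longrightarrow> rat_zeros (gpoch d (length ks) (phi1 ks) * C1a_num d d2 ks) (C1a_den d ks)
          \<subseteq> complex_of_real ` {(d - d2) / 2 - real (kx ks 1 + kx ks 2) + 1 .. (d - d2) / 2 - real (kx ks 1)}) \<and>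
      (kx ks 2 = 0 \<longrightarrow> rat_zeros (gpoch d (length ks) (phi1 ks) * C1a_num d d2 ks) (C1a_den d ks) = {})"
    using C1a_part by blast
  have P2: "\<forall>m1 m2. 2 \<le> m1 \<and> m1 \<le> m2 \<and> m2 \<le> length ks \<and>
        (\<forall>a. 2 \<le> a \<and> a \<le> m1 \<longrightarrow> kx ks a = kx ks 2) \<and> kx ks (m2 + 1) = 0 \<longrightarrow>
      (kx ks 1 > kx ks 2 \<and> kx ks 2 > 0 \<longrightarrow> rat_zeros (gpoch d (length ks) (phi1 ks) * C1b_num d ks) (C1b_den d ks)
          \<subseteq> complex_of_real ` {d / 4 * (real m1 - 1) - real (kx ks 1 + kx ks 2) + 1 ..
                                  d / 4 * (2 * real m2 - 3) - real (kx ks (m2 - 1))}) \<and>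
      (kx ks 1 = kx ks 2 \<and> kx ks 2 > 0 \<longrightarrow> rat_zeros (gpoch d (length ks) (phi1 ks) * C1b_num d ks) (C1b_den d ks)
          \<subseteq> complex_of_real ` {d / 4 * (2 * real_of_int \<lceil>real m1 / 2\<rceil> - 1) - real (kx ks 1 + kx ks 2) + 1 ..
                                  d / 4 * (2 * real m2 - 3) - real (kx ks (m2 - 1))}) \<and>
      (kx ks 2 = 0 \<longrightarrow> rat_zeros (gpoch d (length ks) (phi1 ks) * C1b_num d ks) (C1b_den d ks) = {})"
  proof (intro allI impI conjI)
    fix m1 m2 assume h: "2 \<le> m1 \<and> m1 \<le> m2 \<and> m2 \<le> length ks \<and>
        (\<forall>a. 2 \<le> a \<and> a \<le> m1 \<longrightarrow> kx ks a = kx ks 2) \<and> kx ks (m2 + 1) = 0"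
    then have h': "2 \<le> m1" "m1 \<le> m2" "m2 \<le> length ks" "\<forall>a. 2 \<le> a \<and> a \<le> m1 \<longrightarrow> kx ks a = kx ks 2" "kx ks (m2 + 1) = 0"
      by blast+
    show "kx ks 1 > kx ks 2 \<and> kx ks 2 > 0 \<Longrightarrow> rat_zeros (gpoch d (length ks) (phi1 ks) * C1b_num d ks) (C1b_den d ks)
          \<subseteq> complex_of_real ` {d / 4 * (real m1 - 1) - real (kx ks 1 + kx ks 2) + 1 ..
                                  d / 4 * (2 * real m2 - 3) - real (kx ks (m2 - 1))}"
      by (rule C1b_strict[OF d s h'])
    show "kx ks 1 = kx ks 2 \<and> kx ks 2 > 0 \<Longrightarrow> rat_zeros (gpoch d (length ks) (phi1 ks) * C1b_num d ks) (C1b_den d ks)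
          \<subseteq> complex_of_real ` {d / 4 * (2 * real_of_int \<lceil>real m1 / 2\<rceil> - 1) - real (kx ks 1 + kx ks 2) + 1 ..
                                  d / 4 * (2 * real m2 - 3) - real (kx ks (m2 - 1))}"
      by (rule C1b_eq[OF d s h'])
    show "kx ks 2 = 0 \<Longrightarrow> rat_zeros (gpoch d (length ks) (phi1 ks) * C1b_num d ks) (C1b_den d ks) = {}"
      by (rule C1b_empty[OF d s h'])
  qed
  have P3: "\<forall>m1 m2 m3. 1 \<le> m1 \<and> 1 \<le> m2 \<and> 1 \<le> m3 \<and> m1 \<le> length ks \<and> m2 \<le> length ks \<and> m3 \<le> length ks \<and>
        m1 \<le> m3 \<and> m2 \<le> m3 \<and> kx ks 1 \<le> kx ks m1 + 1 \<and>
        (\<forall>a. m2 + 1 \<le> a \<and> a \<le> m3 \<longrightarrow> kx ks a = 1) \<and> kx ks (m3 + 1) = 0 \<longrightarrow>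
      (kx ks 1 \<ge> 2 \<and> m2 < m3 \<longrightarrow> ?Z
          \<subseteq> complex_of_real ` {d / 2 * real m1 - real (kx ks 1) + 3 / 2 ..
                                  d / 2 * (real (m2 + m3) - 1) - real (kx ks m2) / 2 + 1 / 2}) \<and>
      (kx ks 1 \<ge> 2 \<and> m2 = m3 \<longrightarrow> ?Z
          \<subseteq> complex_of_real ` {d / 2 * real m1 - real (kx ks 1) + 3 / 2 ..
                                  d / 2 * (2 * real m3 - 1) - real_of_int \<lceil>real (kx ks m3) / 2\<rceil> + 1 / 2}) \<and>
      (kx ks 1 \<le> 1 \<longrightarrow> ?Z = {})"
  proof (intro allI impI conjI)
    fix m1 m2 m3 assume h: "1 \<le> m1 \<and> 1 \<le> m2 \<and> 1 \<le> m3 \<and> m1 \<le> length ks \<and> m2 \<le> length ks \<and> m3 \<le> length ks \<and>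
        m1 \<le> m3 \<and> m2 \<le> m3 \<and> kx ks 1 \<le> kx ks m1 + 1 \<and>
        (\<forall>a. m2 + 1 \<le> a \<and> a \<le> m3 \<longrightarrow> kx ks a = 1) \<and> kx ks (m3 + 1) = 0"
    then have h': "1 \<le> m1" "1 \<le> m2" "1 \<le> m3" "m1 \<le> length ks" "m2 \<le> length ks" "m3 \<le> length ks"
        "m1 \<le> m3" "m2 \<le> m3" "kx ks 1 \<le> kx ks m1 + 1"
        "\<forall>a. m2 + 1 \<le> a \<and> a \<le> m3 \<longrightarrow> kx ks a = 1" "kx ks (m3 + 1) = 0" by blast+
    show "kx ks 1 \<ge> 2 \<and> m2 < m3 \<Longrightarrow> ?Z
          \<subseteq> complex_of_real ` {d / 2 * real m1 - real (kx ks 1) + 3 / 2 ..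
                                  d / 2 * (real (m2 + m3) - 1) - real (kx ks m2) / 2 + 1 / 2}"
    proof
      fix z assume hh: "kx ks 1 \<ge> 2 \<and> m2 < m3" and zZ: "z \<in> ?Z"
      obtain x1 where x1: "z = complex_of_real x1" "d / 2 * real m1 - real (kx ks 1) + 3 / 2 \<le> x1"
        using C2_LB[OF d s h'(1,4,9) zZ] by blast
      obtain x2 where x2: "z = complex_of_real x2" "x2 \<le> d / 2 * (real (m2 + m3) - 1) - real (kx ks m2) / 2 + 1 / 2"
        using C2_UBa[OF d s h'(2) _ h'(6,10,11) zZ] hh by blast
      have "x1 = x2" using x1(1) x2(1) by simp
      then show "z \<in> complex_of_real ` {d / 2 * real m1 - real (kx ks 1) + 3 / 2 ..
                                  d / 2 * (real (m2 + m3) - 1) - real (kx ks m2) / 2 + 1 / 2}" using x1 x2 by auto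
    qed
    show "kx ks 1 \<ge> 2 \<and> m2 = m3 \<Longrightarrow> ?Z
          \<subseteq> complex_of_real ` {d / 2 * real m1 - real (kx ks 1) + 3 / 2 ..
                                  d / 2 * (2 * real m3 - 1) - real_of_int \<lceil>real (kx ks m3) / 2\<rceil> + 1 / 2}"
    proof
      fix z assume hh: "kx ks 1 \<ge> 2 \<and> m2 = m3" and zZ: "z \<in> ?Z"
      obtain x1 where x1: "z = complex_of_real x1" "d / 2 * real m1 - real (kx ks 1) + 3 / 2 \<le> x1"
        using C2_LB[OF d s h'(1,4,9) zZ] by blast
      obtain x2 where x2: "z = complex_of_real x2" "x2 \<le> d / 2 * (2 * real m3 - 1) - real_of_int \<lceil>real (kx ks m3) / 2\<rceil> + 1 / 2"
        using C2_UBb[OF d s h'(3,6,11) zZ] by blast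
      have "x1 = x2" using x1(1) x2(1) by simp
      then show "z \<in> complex_of_real ` {d / 2 * real m1 - real (kx ks 1) + 3 / 2 ..
                                  d / 2 * (2 * real m3 - 1) - real_of_int \<lceil>real (kx ks m3) / 2\<rceil> + 1 / 2}" using x1 x2 by auto
    qed
    show "kx ks 1 \<le> 1 \<Longrightarrow> ?Z = {}" by (rule C2_empty[OF d s])
  qed
  have P4: "length ks = 2 \<longrightarrow> (\<forall>m. 1 \<le> m \<and> m \<le> length ks - 1 \<and> phi1 ks (m + 1) = 0 \<and> phi1 ks m \<noteq> 0 \<longrightarrow>
      rat_holo_nonzero_at (C1a_num d d2 ks) (C1a_den d ks) (complex_of_real (d / 2 * real m)) \<and>
      rat_pole_at (C1a_num d d2 ks) (C1a_den d ks) (complex_of_real (d / 2 * (real m - 1))))"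
    using C1a_holo[OF d] by blast
  have P5: "\<forall>m. 1 \<le> m \<and> m \<le> length ks - 1 \<and> phi1 ks (m + 1) = 0 \<and> phi1 ks m \<noteq> 0 \<longrightarrow>
      rat_holo_nonzero_at (C1b_num d ks) (C1b_den d ks) (complex_of_real (d / 2 * real m)) \<and>
      rat_pole_at (C1b_num d ks) (C1b_den d ks) (complex_of_real (d / 2 * (real m - 1)))"
    using C1b_holo[OF d s] by blast
  have P6: "\<forall>m. 1 \<le> m \<and> m \<le> 2 * length ks - 1 \<and> phi2 ks (m + 1) = 0 \<and> phi2 ks m \<noteq> 0 \<longrightarrow>
      rat_holo_nonzero_at (C2_num d ks) (C2_den d ks) (complex_of_real (d / 2 * real m)) \<and>
      rat_pole_at (C2_num d ks) (C2_den d ks) (complex_of_real (d / 2 * (real m - 1)))"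
    using C2_holo[OF d s] by blast
  show ?thesis unfolding r2_def k_def using P1 P2 P3 P4 P5 P6 by blast
qed



end
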